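(* Let $M_1,M_2$ be primitive monoids, $N_i$ an order-ideal of $M_i$ ($i=1,2$), and suppose $M_1/N_1\cong M_2/N_2\cong S$. Let $P$ be the pullback of the resulting maps $M_1\to S\leftarrow M_2$. Assume that $p\lhd q$ for all $p\in\mathbb P(N_i)$ and all $q\in\mathbb P(M_i)\setminus\mathbb P(N_i)$, $i=1,2$. Then $P$ is a primitive monoid, $P$ has an order-ideal $N\cong N_1\times N_2$ with $P/N\cong S$, and $\mathbb P(P)=\mathbb P(S)\sqcup\mathbb P(N_1)\sqcup\mathbb P(N_2)$, where the relation $\lhd$ on $\mathbb P(P)$ is given by the relations $\lhd$ of $S$, $N_1$ and $N_2$ on the respective pieces together with $p\lhd q$ for all $p\in\mathbb P(N_1)\sqcup\mathbb P(N_2)$ and $q\in\mathbb P(S)$.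
   Context: Monoids are abelian. A prime is $p$ with $p\not\le0$ and $p\le a+b\Rightarrow p\le a$ or $p\le b$ (algebraic preorder $x\le y$ iff $y=x+z$); a primitive monoid is a primely generated antisymmetric refinement monoid, and $\mathbb P(M)$ denotes its set of primes. For primes, $q\lhd p$ means $p+q=p$; a primitive monoid is determined up to isomorphism by $(\mathbb P(M),\lhd)$. An order-ideal is a nonempty $I$ with $x+y\in I\iff x,y\in I$; $M/I$ is the quotient by $x\equiv y\iff x+u=y+v$ for some $u,v\in I$, and $\mathbb P(N)=\mathbb P(M)\cap N$. The quotient $M/N$ of a primitive monoid is primitive with primes identified with $\mathbb P(M)\setminus\mathbb P(N)$. The pullback of $f_1\colon M_1\to S$, $f_2\colon M_2\to S$ is $\{(x,y)\in M_1\times M_2: f_1(x)=f_2(y)\}$. *)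

theory Defs
  imports "HOL-Algebra.Group"
begin

text \<open>Abelian monoids are represented as HOL-Algebra monoid records, written
multiplicatively: the paper's x + y is the product of x and y in M and the
paper's 0 is the unit of M.\<close>

definition aleq :: "'a monoid \<Rightarrow> 'a \<Rightarrow> 'a \<Rightarrow> bool" where
  "aleq M x y \<longleftrightarrow> (\<exists>z\<in>carrier M. y = x \<otimes>\<^bsub>M\<^esub> z)"

definition is_prime :: "'a monoid \<Rightarrow> 'a \<Rightarrow> bool" where
  "is_prime M p \<longleftrightarrow> p \<in> carrier M \<and> \<not> aleq M p \<one>\<^bsub>M\<^esub> \<and>
     (\<forall>a\<in>carrier M. \<forall>b\<in>carrier M. aleq M p (a \<otimes>\<^bsub>M\<^esub> b) \<longrightarrow> aleq M p a \<or> aleq M p b)"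

definition primes :: "'a monoid \<Rightarrow> 'a set" where
  "primes M = {p. is_prime M p}"

definition lsum :: "'a monoid \<Rightarrow> 'a list \<Rightarrow> 'a" where
  "lsum M xs = foldr (\<lambda>x y. x \<otimes>\<^bsub>M\<^esub> y) xs \<one>\<^bsub>M\<^esub>"

definition primely_generated :: "'a monoid \<Rightarrow> bool" where
  "primely_generated M \<longleftrightarrow>
     (\<forall>x\<in>carrier M. \<exists>xs. set xs \<subseteq> primes M \<and> x = lsum M xs)"

definition antisymmetric_monoid :: "'a monoid \<Rightarrow> bool" where
  "antisymmetric_monoid M \<longleftrightarrow>
     (\<forall>x\<in>carrier M. \<forall>y\<in>carrier M. aleq M x y \<and> aleq M y x \<longrightarrow> x = y)"

definition refinement_monoid :: "'a monoid \<Rightarrow> bool" where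
  "refinement_monoid M \<longleftrightarrow>
     (\<forall>a0\<in>carrier M. \<forall>a1\<in>carrier M. \<forall>b0\<in>carrier M. \<forall>b1\<in>carrier M.
        a0 \<otimes>\<^bsub>M\<^esub> a1 = b0 \<otimes>\<^bsub>M\<^esub> b1 \<longrightarrow>
        (\<exists>c00\<in>carrier M. \<exists>c01\<in>carrier M. \<exists>c10\<in>carrier M. \<exists>c11\<in>carrier M.
           a0 = c00 \<otimes>\<^bsub>M\<^esub> c01 \<and> a1 = c10 \<otimes>\<^bsub>M\<^esub> c11 \<and>
           b0 = c00 \<otimes>\<^bsub>M\<^esub> c10 \<and> b1 = c01 \<otimes>\<^bsub>M\<^esub> c11))"

definition primitive :: "'a monoid \<Rightarrow> bool" where
  "primitive M \<longleftrightarrow> comm_monoid M \<and> primely_generated M \<and>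
     antisymmetric_monoid M \<and> refinement_monoid M"

text \<open>lhd M q p is the paper's q \<lhd> p, i.e. p + q = p.\<close>
definition lhd :: "'a monoid \<Rightarrow> 'a \<Rightarrow> 'a \<Rightarrow> bool" where
  "lhd M q p \<longleftrightarrow> p \<otimes>\<^bsub>M\<^esub> q = p"

definition order_ideal :: "'a monoid \<Rightarrow> 'a set \<Rightarrow> bool" where
  "order_ideal M I \<longleftrightarrow> I \<subseteq> carrier M \<and> I \<noteq> {} \<and>
     (\<forall>x\<in>carrier M. \<forall>y\<in>carrier M. x \<otimes>\<^bsub>M\<^esub> y \<in> I \<longleftrightarrow> x \<in> I \<and> y \<in> I)"

definition submon :: "'a monoid \<Rightarrow> 'a set \<Rightarrow> 'a monoid" where
  "submon M I = M\<lparr>carrier := I\<rparr>"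

definition qcong :: "'a monoid \<Rightarrow> 'a set \<Rightarrow> 'a \<Rightarrow> 'a \<Rightarrow> bool" where
  "qcong M I x y \<longleftrightarrow> (\<exists>u\<in>I. \<exists>v\<in>I. x \<otimes>\<^bsub>M\<^esub> u = y \<otimes>\<^bsub>M\<^esub> v)"

definition qclass :: "'a monoid \<Rightarrow> 'a set \<Rightarrow> 'a \<Rightarrow> 'a set" where
  "qclass M I x = {y\<in>carrier M. qcong M I x y}"

definition quot :: "'a monoid \<Rightarrow> 'a set \<Rightarrow> 'a set monoid" where
  "quot M I = \<lparr>carrier = qclass M I ` carrier M,
     mult = (\<lambda>A B. qclass M I ((SOME a. a \<in> A) \<otimes>\<^bsub>M\<^esub> (SOME b. b \<in> B))),
     one = qclass M I \<one>\<^bsub>M\<^esub>\<rparr>"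

definition pullback :: "'a monoid \<Rightarrow> 'b monoid \<Rightarrow> ('a \<Rightarrow> 's) \<Rightarrow> ('b \<Rightarrow> 's) \<Rightarrow> ('a \<times> 'b) monoid" where
  "pullback M1 M2 f1 f2 =
     (M1 \<times>\<times> M2)\<lparr>carrier := {(x, y). x \<in> carrier M1 \<and> y \<in> carrier M2 \<and> f1 x = f2 y}\<rparr>"

text \<open>The relation \<lhd> on the disjoint union P(S) + (P(N1) + P(N2)) described in the theorem:
lhd_sum S N1 N2 x y means x \<lhd> y.\<close>
fun lhd_sum :: "'s monoid \<Rightarrow> 'a monoid \<Rightarrow> 'b monoid \<Rightarrow> ('s + ('a + 'b)) \<Rightarrow> ('s + ('a + 'b)) \<Rightarrow> bool" where
  "lhd_sum S N1 N2 (Inl s) (Inl t) = lhd S s t"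
| "lhd_sum S N1 N2 (Inr (Inl a)) (Inr (Inl b)) = lhd N1 a b"
| "lhd_sum S N1 N2 (Inr (Inr a)) (Inr (Inr b)) = lhd N2 a b"
| "lhd_sum S N1 N2 (Inr _) (Inl _) = True"
| "lhd_sum S N1 N2 _ _ = False"

end

theory Submission
  imports Defs
begin



lemma lsum_Nil[simp]: "lsum M [] = \<one>\<^bsub>M\<^esub>" by (simp add: lsum_def)
lemma lsum_Cons[simp]: "lsum M (x#xs) = x \<otimes>\<^bsub>M\<^esub> lsum M xs" by (simp add: lsum_def)

locale oideal = comm_monoid M for M (structure) + fixes N assumes oi: "order_ideal M N"
begin

lemma N_sub: "N \<subseteq> carrier M" using oi by (simp add: order_ideal_def)
lemma mult_N: "x \<in> carrier M \<Longrightarrow> y \<in> carrier M \<Longrightarrow> (x \<otimes> y \<in> N) = (x \<in> N \<and> y \<in> N)"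
  using oi by (simp add: order_ideal_def)
lemma one_N: "\<one> \<in> N"
proof -
  obtain n where "n \<in> N" using oi by (auto simp: order_ideal_def)
  then show ?thesis using mult_N[of n \<one>] N_sub by auto
qed
lemma inN: "x \<in> N \<Longrightarrow> x \<in> carrier M" using N_sub by auto

lemma lsum_closed: "set xs \<subseteq> carrier M \<Longrightarrow> lsum M xs \<in> carrier M"
  by (induction xs) auto
lemma lsum_append: "set xs \<subseteq> carrier M \<Longrightarrow> set ys \<subseteq> carrier M \<Longrightarrow> lsum M (xs @ ys) = lsum M xs \<otimes> lsum M ys"
  by (induction xs) (auto simp: lsum_closed m_assoc)
lemma lsum_N: "set xs \<subseteq> carrier M \<Longrightarrow> (lsum M xs \<in> N) = (set xs \<subseteq> N)"
  by (induction xs) (auto simp: lsum_closed mult_N one_N)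
lemma lsum_mem: "set xs \<subseteq> carrier M \<Longrightarrow> q \<in> set xs \<Longrightarrow> \<exists>r\<in>carrier M. lsum M xs = q \<otimes> r"
proof (induction xs)
  case Nil then show ?case by simp
next
  case (Cons a xs)
  show ?case
  proof (cases "q = a")
    case True then show ?thesis using Cons.prems lsum_closed by auto
  next
    case False
    then obtain r where r: "r \<in> carrier M" "lsum M xs = q \<otimes> r" using Cons by auto
    have "q \<in> carrier M" using Cons.prems by auto
    then have "lsum M (a#xs) = q \<otimes> (a \<otimes> r)" using r Cons.prems by (simp add: m_lcomm)
    then show ?thesis using r Cons.prems by auto
  qed
qed

lemma aleq_N: "aleq M x y \<Longrightarrow> x \<in> carrier M \<Longrightarrow> y \<in> N \<Longrightarrow> x \<in> N"
  unfolding aleq_def using mult_N by auto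

lemma qcong_refl: "x \<in> carrier M \<Longrightarrow> qcong M N x x"
  unfolding qcong_def using one_N by blast
lemma qcong_sym: "qcong M N x y \<Longrightarrow> qcong M N y x"
  unfolding qcong_def by metis
lemma qcong_trans: assumes "x \<in> carrier M" "y \<in> carrier M" "z \<in> carrier M"
  "qcong M N x y" "qcong M N y z" shows "qcong M N x z"
proof -
  obtain u v u' v' where uv: "u \<in> N" "v \<in> N" "u' \<in> N" "v' \<in> N" "x \<otimes> u = y \<otimes> v" "y \<otimes> u' = z \<otimes> v'"
    using assms unfolding qcong_def by blast
  have c: "u \<in> carrier M" "v \<in> carrier M" "u' \<in> carrier M" "v' \<in> carrier M" using uv inN by auto
  have "x \<otimes> (u \<otimes> u') = (x \<otimes> u) \<otimes> u'" using c assms by (simp add: m_assoc)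
  also have "\<dots> = (y \<otimes> v) \<otimes> u'" using uv by simp
  also have "\<dots> = (y \<otimes> u') \<otimes> v" using c assms by (simp add: m_ac)
  also have "\<dots> = z \<otimes> (v' \<otimes> v)" using uv c assms by (simp add: m_assoc)
  finally show ?thesis unfolding qcong_def using uv c mult_N by blast
qed
lemma qcong_mult: assumes "x \<in> carrier M" "y \<in> carrier M" "a \<in> carrier M" "b \<in> carrier M"
  "qcong M N x a" "qcong M N y b" shows "qcong M N (x \<otimes> y) (a \<otimes> b)"
proof -
  obtain u v u' v' where uv: "u \<in> N" "v \<in> N" "u' \<in> N" "v' \<in> N" "x \<otimes> u = a \<otimes> v" "y \<otimes> u' = b \<otimes> v'"
    using assms unfolding qcong_def by blast
  have c: "u \<in> carrier M" "v \<in> carrier M" "u' \<in> carrier M" "v' \<in> carrier M" using uv inN by auto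
  have "(x \<otimes> y) \<otimes> (u \<otimes> u') = (x \<otimes> u) \<otimes> (y \<otimes> u')" using c assms by (simp add: m_ac)
  also have "\<dots> = (a \<otimes> b) \<otimes> (v \<otimes> v')" using uv c assms by (simp add: m_ac)
  finally show ?thesis unfolding qcong_def using uv c mult_N by blast
qed

lemma qclass_self: "x \<in> carrier M \<Longrightarrow> x \<in> qclass M N x"
  unfolding qclass_def using qcong_refl by auto
lemma qclass_eq: assumes "x \<in> carrier M" "y \<in> carrier M"
  shows "(qclass M N x = qclass M N y) = qcong M N x y"
proof
  assume "qclass M N x = qclass M N y"
  then have "y \<in> qclass M N x" using qclass_self assms by auto
  then show "qcong M N x y" by (simp add: qclass_def)
next
  assume h: "qcong M N x y"
  show "qclass M N x = qclass M N y"
    unfolding qclass_def using h qcong_sym qcong_trans assms by blast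
qed
lemma qclass_mult: assumes "x \<in> carrier M" "y \<in> carrier M"
  shows "qclass M N x \<otimes>\<^bsub>quot M N\<^esub> qclass M N y = qclass M N (x \<otimes> y)"
proof -
  define a where "a = (SOME a. a \<in> qclass M N x)"
  define b where "b = (SOME b. b \<in> qclass M N y)"
  have "a \<in> qclass M N x" unfolding a_def using qclass_self assms by (metis someI)
  then have a: "a \<in> carrier M" "qcong M N x a" by (auto simp: qclass_def)
  have "b \<in> qclass M N y" unfolding b_def using qclass_self assms by (metis someI)
  then have b: "b \<in> carrier M" "qcong M N y b" by (auto simp: qclass_def)
  have "qcong M N (x \<otimes> y) (a \<otimes> b)" using qcong_mult a b assms by auto
  then have "qclass M N (a \<otimes> b) = qclass M N (x \<otimes> y)"
    using qclass_eq a b assms by (metis m_closed qcong_sym)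
  then show ?thesis unfolding quot_def a_def b_def by simp
qed
lemma carrier_quot: "carrier (quot M N) = qclass M N ` carrier M" by (simp add: quot_def)
lemma one_quot: "\<one>\<^bsub>quot M N\<^esub> = qclass M N \<one>" by (simp add: quot_def)
lemma qcong_one: "x \<in> carrier M \<Longrightarrow> qcong M N x \<one> = (x \<in> N)"
proof
  assume "qcong M N x \<one>"
  then obtain u v where "u \<in> N" "v \<in> N" "x \<otimes> u = \<one> \<otimes> v" unfolding qcong_def by blast
  moreover assume "x \<in> carrier M"
  ultimately show "x \<in> N" using mult_N inN by auto
next
  assume "x \<in> carrier M" "x \<in> N" then show "qcong M N x \<one>"
    unfolding qcong_def using one_N by (metis m_comm one_closed)
qed

end

lemma submon_simps[simp]: "carrier (submon M N) = N" "mult (submon M N) = mult M" "one (submon M N) = one M"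
  by (simp_all add: submon_def)

lemma primes_carrier: "p \<in> primes M \<Longrightarrow> p \<in> carrier M"
  by (simp add: primes_def is_prime_def)

context oideal begin

lemma aleq_sub_iff: "x \<in> N \<Longrightarrow> y \<in> N \<Longrightarrow> aleq (submon M N) x y = aleq M x y"
  unfolding aleq_def using mult_N inN by auto

lemma prime_to_sub: assumes "p \<in> primes M" "p \<in> N" shows "p \<in> primes (submon M N)"
proof -
  have p: "is_prime M p" using assms by (simp add: primes_def)
  have "\<not> aleq (submon M N) p \<one>" using p assms aleq_sub_iff one_N by (simp add: is_prime_def)
  moreover have "\<forall>a\<in>N. \<forall>b\<in>N. aleq (submon M N) p (a \<otimes> b) \<longrightarrow> aleq (submon M N) p a \<or> aleq (submon M N) p b"
  proof (intro ballI impI)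
    fix a b assume ab: "a \<in> N" "b \<in> N" "aleq (submon M N) p (a \<otimes> b)"
    then have "a \<otimes> b \<in> N" using mult_N inN by auto
    then have "aleq M p (a \<otimes> b)" using ab aleq_sub_iff assms by auto
    then have "aleq M p a \<or> aleq M p b" using p ab inN by (simp add: is_prime_def)
    then show "aleq (submon M N) p a \<or> aleq (submon M N) p b" using aleq_sub_iff ab assms by auto
  qed
  ultimately show ?thesis using assms by (simp add: primes_def is_prime_def)
qed

end
context oideal begin
lemma absorb_from_H:
  assumes pg: "primely_generated M"
    and H: "\<forall>p\<in>primes (submon M N). \<forall>q\<in>primes M - primes (submon M N). lhd M p q"
    and x: "x \<in> carrier M" "x \<notin> N" and n: "n \<in> N"
  shows "x \<otimes> n = x"
proof -
  obtain xs where xs: "set xs \<subseteq> primes M" "x = lsum M xs" using pg x unfolding primely_generated_def by blast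
  have xsc: "set xs \<subseteq> carrier M" using xs(1) primes_carrier[of _ M] by blast
  have "\<not> set xs \<subseteq> N" using lsum_N[OF xsc] xs(2) x(2) by simp
  then obtain q where q: "q \<in> set xs" "q \<notin> N" by blast
  obtain r where r: "r \<in> carrier M" "x = q \<otimes> r" using lsum_mem[OF xsc q(1)] xs by auto
  have qc: "q \<in> carrier M" using q xsc by auto
  have "q \<in> primes M" using q xs by blast
  moreover have "q \<notin> primes (submon M N)" using q(2) by (simp add: primes_def is_prime_def)
  ultimately have qp: "q \<in> primes M - primes (submon M N)" by blast
  obtain ns where ns: "set ns \<subseteq> primes M" "n = lsum M ns" using pg n inN unfolding primely_generated_def by blast
  have nsc: "set ns \<subseteq> carrier M" using ns(1) primes_carrier[of _ M] by blast
  have nsN: "set ns \<subseteq> N" using lsum_N[OF nsc] ns n by auto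
  have step: "x \<otimes> p = x" if "p \<in> set ns" for p
  proof -
    have "p \<in> primes (submon M N)" using prime_to_sub that ns nsN by auto
    then have qpq: "q \<otimes> p = q" using H qp unfolding lhd_def by blast
    have pc: "p \<in> carrier M" using that nsc by auto
    have "x \<otimes> p = q \<otimes> (r \<otimes> p)" using r qc pc by (simp add: m_assoc)
    also have "\<dots> = (q \<otimes> p) \<otimes> r" using r qc pc by (simp add: m_ac)
    finally show ?thesis using \<open>q \<otimes> p = q\<close> r by simp
  qed
  have "set ys \<subseteq> set ns \<Longrightarrow> x \<otimes> lsum M ys = x" for ys
  proof (induction ys)
    case Nil then show ?case using x by simp
  next
    case (Cons a ys)
    then have "a \<in> carrier M" "set ys \<subseteq> carrier M" using nsc by auto
    then have "x \<otimes> lsum M (a#ys) = (x \<otimes> a) \<otimes> lsum M ys" using x lsum_closed by (simp add: m_assoc)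
    then show ?case using Cons step by auto
  qed
  then show ?thesis using ns by auto
qed

end



locale absorbing = oideal + assumes absorb: "x \<in> carrier M \<Longrightarrow> x \<notin> N \<Longrightarrow> n \<in> N \<Longrightarrow> x \<otimes> n = x"
begin

lemma absorb': assumes "x \<in> carrier M" "x \<notin> N" "n \<in> N" shows "n \<otimes> x = x"
proof -
  have "n \<otimes> x = x \<otimes> n" using assms inN m_comm by simp
  then show ?thesis using absorb assms by simp
qed

lemma qcong_iff: assumes "x \<in> carrier M" "y \<in> carrier M"
  shows "qcong M N x y = ((x \<in> N \<and> y \<in> N) \<or> x = y)"
proof
  assume "qcong M N x y"
  then obtain u v where uv: "u \<in> N" "v \<in> N" "x \<otimes> u = y \<otimes> v" unfolding qcong_def by blast
  have uc: "u \<in> carrier M" "v \<in> carrier M" using uv inN by auto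
  show "(x \<in> N \<and> y \<in> N) \<or> x = y"
  proof (cases "x \<in> N")
    case True
    then have "x \<otimes> u \<in> N" using mult_N[of x u] uv(1) uc assms by simp
    then have "y \<otimes> v \<in> N" using uv(3) by simp
    then show ?thesis using True mult_N[of y v] assms uc by simp
  next
    case False
    then have "x \<otimes> u \<notin> N" using mult_N[of x u] uc assms by simp
    then have "y \<otimes> v \<notin> N" using uv(3) by simp
    then have "y \<notin> N" using mult_N[of y v] assms uc uv by simp
    then have "y \<otimes> v = y" "x \<otimes> u = x" using False uv absorb assms by auto
    then show ?thesis using uv by simp
  qed
next
  assume h: "(x \<in> N \<and> y \<in> N) \<or> x = y"
  show "qcong M N x y"
  proof (cases "x = y")
    case True then show ?thesis using qcong_refl assms by simp
  next
    case False
    then have "x \<in> N" "y \<in> N" using h by auto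
    moreover have "x \<otimes> y = y \<otimes> x" using assms m_comm by simp
    ultimately show ?thesis unfolding qcong_def by blast
  qed
qed

lemma primes_sub_eq: "primes (submon M N) = primes M \<inter> N"
proof
  show "primes M \<inter> N \<subseteq> primes (submon M N)" using prime_to_sub by auto
next
  show "primes (submon M N) \<subseteq> primes M \<inter> N"
  proof
    fix p assume "p \<in> primes (submon M N)"
    then have ps: "is_prime (submon M N) p" by (simp add: primes_def)
    then have pN: "p \<in> N" by (simp add: is_prime_def)
    have pc: "p \<in> carrier M" using pN inN by auto
    have "\<not> aleq M p \<one>" using ps aleq_sub_iff pN one_N by (simp add: is_prime_def)
    moreover have "aleq M p a \<or> aleq M p b" if ab: "a \<in> carrier M" "b \<in> carrier M" "aleq M p (a \<otimes> b)" for a b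
    proof (cases "a \<in> N \<and> b \<in> N")
      case True
      then have "a \<otimes> b \<in> N" using mult_N ab by auto
      then have "aleq (submon M N) p (a \<otimes> b)" using aleq_sub_iff pN ab by auto
      then have "aleq (submon M N) p a \<or> aleq (submon M N) p b" using ps True by (simp add: is_prime_def)
      then show ?thesis using aleq_sub_iff pN True by auto
    next
      case False
      then have "a \<notin> N \<or> b \<notin> N" by simp
      then show ?thesis
      proof
        assume "a \<notin> N" then have "p \<otimes> a = a" using absorb' pN ab by simp
        then show ?thesis using ab unfolding aleq_def by metis
      next
        assume "b \<notin> N" then have "p \<otimes> b = b" using absorb' pN ab by simp
        then show ?thesis using ab unfolding aleq_def by metis
      qed
    qed
    ultimately show "p \<in> primes M \<inter> N" using pN pc by (auto simp: primes_def is_prime_def)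
  qed
qed

end


locale fside = absorbing +
  fixes S :: "'s monoid" and f :: "'a \<Rightarrow> 's"
  assumes S: "comm_monoid S" and fhom: "f \<in> hom M S" and fonto: "f ` carrier M = carrier S"
    and feq: "x \<in> carrier M \<Longrightarrow> y \<in> carrier M \<Longrightarrow> (f x = f y) = qcong M N x y"
begin

lemma f_closed: "x \<in> carrier M \<Longrightarrow> f x \<in> carrier S"
  using fhom unfolding hom_def by (blast intro: funcset_mem)
lemma f_mult: "x \<in> carrier M \<Longrightarrow> y \<in> carrier M \<Longrightarrow> f (x \<otimes> y) = f x \<otimes>\<^bsub>S\<^esub> f y"
  using fhom unfolding hom_def by blast
lemma S_mon: "monoid S" using comm_monoid.axioms(1)[OF S] .
lemma S_one: "\<one>\<^bsub>S\<^esub> \<in> carrier S" using monoid.one_closed[OF S_mon] .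
lemma f_one: "f \<one> = \<one>\<^bsub>S\<^esub>"
proof -
  have "\<one>\<^bsub>S\<^esub> \<in> f ` carrier M" using fonto S_one by (rule ssubst)
  then obtain x where x0: "\<one>\<^bsub>S\<^esub> = f x" "x \<in> carrier M" by (rule imageE)
  have x: "x \<in> carrier M" "f x = \<one>\<^bsub>S\<^esub>" using x0 by simp_all
  have "f x = f (\<one> \<otimes> x)" using x(1) by (simp only: l_one)
  also have "\<dots> = f \<one> \<otimes>\<^bsub>S\<^esub> f x" using f_mult[OF one_closed x(1)] .
  also have "\<dots> = f \<one>" unfolding x(2) using monoid.r_one[OF S_mon f_closed[OF one_closed]] .
  finally show ?thesis using x(2) by (rule subst)
qed
lemma f_one_iff: "x \<in> carrier M \<Longrightarrow> (f x = \<one>\<^bsub>S\<^esub>) = (x \<in> N)"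
  using feq[of x \<one>] f_one qcong_one by simp
lemma f_inj: "x \<in> carrier M \<Longrightarrow> y \<in> carrier M \<Longrightarrow> x \<notin> N \<Longrightarrow> f x = f y \<Longrightarrow> x = y"
  using feq[of x y] qcong_iff[of x y] by simp
lemma f_notN: "x \<in> carrier M \<Longrightarrow> y \<in> carrier M \<Longrightarrow> x \<notin> N \<Longrightarrow> f x = f y \<Longrightarrow> y \<notin> N"
  using f_one_iff[of x] f_one_iff[of y] by simp
lemma f_lsum: "set xs \<subseteq> carrier M \<Longrightarrow> f (lsum M xs) = lsum S (map f xs)"
  by (induction xs) (auto simp: f_one f_mult lsum_closed)

lemma aleq_f: assumes "x \<in> carrier M" "x \<notin> N" "y \<in> carrier M"
  shows "aleq S (f x) (f y) = aleq M x y"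
proof
  assume "aleq S (f x) (f y)"
  then obtain s where s: "s \<in> carrier S" "f y = f x \<otimes>\<^bsub>S\<^esub> s" unfolding aleq_def by blast
  then obtain z where z: "z \<in> carrier M" "s = f z" using fonto by blast
  have e: "f y = f (x \<otimes> z)" using s z f_mult assms by simp
  have "x \<otimes> z \<notin> N" using mult_N assms z by simp
  then have "y = x \<otimes> z" using f_inj[of "x \<otimes> z" y] e assms z by simp
  then show "aleq M x y" using z unfolding aleq_def by blast
next
  assume "aleq M x y"
  then obtain z where z: "z \<in> carrier M" "y = x \<otimes> z" unfolding aleq_def by blast
  then have "f y = f x \<otimes>\<^bsub>S\<^esub> f z" using f_mult assms by simp
  then show "aleq S (f x) (f y)" using z f_closed unfolding aleq_def by blast
qed

lemma primes_S: "primes S = f ` (primes M - N)"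
proof
  show "f ` (primes M - N) \<subseteq> primes S"
  proof
    fix s assume "s \<in> f ` (primes M - N)"
    then obtain p where p: "p \<in> primes M" "p \<notin> N" "s = f p" by blast
    have pp: "is_prime M p" using p by (simp add: primes_def)
    have pc: "p \<in> carrier M" using pp by (simp add: is_prime_def)
    have "\<not> aleq S s \<one>\<^bsub>S\<^esub>" using aleq_f[OF pc p(2), of \<one>] f_one pp p(3) by (simp add: is_prime_def)
    moreover have "aleq S s a \<or> aleq S s b" if ab: "a \<in> carrier S" "b \<in> carrier S" "aleq S s (a \<otimes>\<^bsub>S\<^esub> b)" for a b
    proof -
      obtain a' b' where a': "a' \<in> carrier M" "a = f a'" "b' \<in> carrier M" "b = f b'" using fonto ab by blast
      have "aleq S (f p) (f (a' \<otimes> b'))" using ab a' f_mult p by simp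
      then have "aleq M p (a' \<otimes> b')" using aleq_f pc p a' by simp
      then have "aleq M p a' \<or> aleq M p b'" using pp a' by (simp add: is_prime_def)
      then show ?thesis using aleq_f pc p a' by simp
    qed
    ultimately show "s \<in> primes S" using p f_closed pc by (simp add: primes_def is_prime_def)
  qed
next
  show "primes S \<subseteq> f ` (primes M - N)"
  proof
    fix s assume "s \<in> primes S"
    then have ps: "is_prime S s" by (simp add: primes_def)
    then have "s \<in> carrier S" unfolding is_prime_def by blast
    then have "s \<in> f ` carrier M" using fonto by simp
    then obtain x where x: "x \<in> carrier M" "s = f x" by blast
    have "x \<notin> N"
    proof
      assume "x \<in> N"
      then have "s = \<one>\<^bsub>S\<^esub>" using f_one_iff x by simp
      moreover have "aleq S \<one>\<^bsub>S\<^esub> \<one>\<^bsub>S\<^esub>" unfolding aleq_def using S_one monoid.l_one[OF S_mon S_one] by metis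
      ultimately show False using ps by (simp add: is_prime_def)
    qed
    note xN = this
    have "\<not> aleq M x \<one>" using aleq_f[OF x(1) xN, of \<one>] f_one ps x by (simp add: is_prime_def)
    moreover have "aleq M x a \<or> aleq M x b" if ab: "a \<in> carrier M" "b \<in> carrier M" "aleq M x (a \<otimes> b)" for a b
    proof -
      have "aleq S s (f a \<otimes>\<^bsub>S\<^esub> f b)" using aleq_f[OF x(1) xN, of "a \<otimes> b"] ab x f_mult by simp
      then have "aleq S s (f a) \<or> aleq S s (f b)" using ps ab f_closed by (simp add: is_prime_def)
      then show ?thesis using aleq_f[OF x(1) xN] ab x by simp
    qed
    ultimately have "x \<in> primes M" using x by (simp add: primes_def is_prime_def)
    then show "s \<in> f ` (primes M - N)" using x xN by blast
  qed
qed

end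



context oideal begin

lemma quot_iso:
  assumes Sm: "monoid S" and fh: "f \<in> hom M S" and fo: "f ` carrier M = carrier S"
    and fe: "\<And>x y. x \<in> carrier M \<Longrightarrow> y \<in> carrier M \<Longrightarrow> (f x = f y) = qcong M N x y"
  shows "(\<lambda>A. f (SOME a. a \<in> A)) \<in> iso (quot M N) S"
    and "\<And>x. x \<in> carrier M \<Longrightarrow> (\<lambda>A. f (SOME a. a \<in> A)) (qclass M N x) = f x"
proof -
  define \<chi> where "\<chi> = (\<lambda>A. f (SOME a. a \<in> A))"
  have chi: "\<chi> (qclass M N x) = f x" if x: "x \<in> carrier M" for x
  proof -
    have "(SOME a. a \<in> qclass M N x) \<in> qclass M N x" using qclass_self[OF x] by (rule someI)
    then have "(SOME a. a \<in> qclass M N x) \<in> carrier M" "qcong M N x (SOME a. a \<in> qclass M N x)"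
      by (simp_all add: qclass_def)
    then show ?thesis unfolding \<chi>_def using fe x qcong_sym by simp
  qed
  show "\<And>x. x \<in> carrier M \<Longrightarrow> (\<lambda>A. f (SOME a. a \<in> A)) (qclass M N x) = f x"
    using chi unfolding \<chi>_def by simp
  have fc: "f x \<in> carrier S" if "x \<in> carrier M" for x using fh that unfolding hom_def by (blast intro: funcset_mem)
  have fm: "f (x \<otimes> y) = f x \<otimes>\<^bsub>S\<^esub> f y" if "x \<in> carrier M" "y \<in> carrier M" for x y
    using fh that unfolding hom_def by blast
  have "\<chi> \<in> hom (quot M N) S"
  proof (rule homI)
    fix A assume "A \<in> carrier (quot M N)"
    then obtain x where "x \<in> carrier M" "A = qclass M N x" by (auto simp: carrier_quot)
    then show "\<chi> A \<in> carrier S" using chi fc by simp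
  next
    fix A B assume "A \<in> carrier (quot M N)" "B \<in> carrier (quot M N)"
    then obtain x y where xy: "x \<in> carrier M" "A = qclass M N x" "y \<in> carrier M" "B = qclass M N y" by (auto simp: carrier_quot)
    then show "\<chi> (A \<otimes>\<^bsub>quot M N\<^esub> B) = \<chi> A \<otimes>\<^bsub>S\<^esub> \<chi> B" using chi fm qclass_mult by simp
  qed
  moreover have "bij_betw \<chi> (carrier (quot M N)) (carrier S)"
  proof (rule bij_betw_imageI)
    show "inj_on \<chi> (carrier (quot M N))"
    proof (rule inj_onI)
      fix A B assume "A \<in> carrier (quot M N)" "B \<in> carrier (quot M N)" "\<chi> A = \<chi> B"
      then obtain x y where xy: "x \<in> carrier M" "A = qclass M N x" "y \<in> carrier M" "B = qclass M N y" "\<chi> A = \<chi> B" by (auto simp: carrier_quot)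
      then have "f x = f y" using chi by simp
      then show "A = B" using xy fe qclass_eq by simp
    qed
  next
    have "\<chi> ` carrier (quot M N) = f ` carrier M" using chi by (force simp: carrier_quot)
    then show "\<chi> ` carrier (quot M N) = carrier S" using fo by simp
  qed
  ultimately show "(\<lambda>A. f (SOME a. a \<in> A)) \<in> iso (quot M N) S" unfolding iso_def \<chi>_def by simp
qed

lemma iso_f:
  assumes Sm: "monoid S" and phi: "\<phi> \<in> iso (quot M N) S"
  shows "(\<lambda>x. \<phi> (qclass M N x)) \<in> hom M S"
    and "(\<lambda>x. \<phi> (qclass M N x)) ` carrier M = carrier S"
    and "\<And>x y. x \<in> carrier M \<Longrightarrow> y \<in> carrier M \<Longrightarrow> (\<phi> (qclass M N x) = \<phi> (qclass M N y)) = qcong M N x y"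
proof -
  have ph: "\<phi> \<in> hom (quot M N) S" and bij: "bij_betw \<phi> (carrier (quot M N)) (carrier S)"
    using phi unfolding iso_def by auto
  have inj: "inj_on \<phi> (carrier (quot M N))" using bij by (simp add: bij_betw_def)
  have im: "\<phi> ` carrier (quot M N) = carrier S" using bij by (simp add: bij_betw_def)
  have pc: "\<phi> A \<in> carrier S" if "A \<in> carrier (quot M N)" for A using ph that unfolding hom_def by (blast intro: funcset_mem)
  have pm: "\<phi> (A \<otimes>\<^bsub>quot M N\<^esub> B) = \<phi> A \<otimes>\<^bsub>S\<^esub> \<phi> B" if "A \<in> carrier (quot M N)" "B \<in> carrier (quot M N)" for A B
    using ph that unfolding hom_def by blast
  have qc: "qclass M N x \<in> carrier (quot M N)" if "x \<in> carrier M" for x using that by (simp add: carrier_quot)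
  show "(\<lambda>x. \<phi> (qclass M N x)) \<in> hom M S"
  proof (rule homI)
    fix x assume "x \<in> carrier M" then show "\<phi> (qclass M N x) \<in> carrier S" using pc qc by simp
  next
    fix x y assume xy: "x \<in> carrier M" "y \<in> carrier M"
    have "\<phi> (qclass M N (x \<otimes> y)) = \<phi> (qclass M N x \<otimes>\<^bsub>quot M N\<^esub> qclass M N y)" using qclass_mult xy by simp
    also have "\<dots> = \<phi> (qclass M N x) \<otimes>\<^bsub>S\<^esub> \<phi> (qclass M N y)" using pm qc xy by simp
    finally show "\<phi> (qclass M N (x \<otimes> y)) = \<phi> (qclass M N x) \<otimes>\<^bsub>S\<^esub> \<phi> (qclass M N y)" .
  qed
  have "(\<lambda>x. \<phi> (qclass M N x)) ` carrier M = \<phi> ` (qclass M N ` carrier M)" by (simp add: image_image)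
  then show "(\<lambda>x. \<phi> (qclass M N x)) ` carrier M = carrier S" using im by (simp add: carrier_quot)
  fix x y assume xy: "x \<in> carrier M" "y \<in> carrier M"
  have "(\<phi> (qclass M N x) = \<phi> (qclass M N y)) = (qclass M N x = qclass M N y)"
    using inj qc xy unfolding inj_on_def by metis
  then show "(\<phi> (qclass M N x) = \<phi> (qclass M N y)) = qcong M N x y" using qclass_eq xy by simp
qed

end



lemma pb_carrier: "z \<in> carrier (pullback M1 M2 f1 f2) \<longleftrightarrow>
   fst z \<in> carrier M1 \<and> snd z \<in> carrier M2 \<and> f1 (fst z) = f2 (snd z)"
  by (cases z) (simp add: pullback_def)
lemma pb_mult: "z \<otimes>\<^bsub>pullback M1 M2 f1 f2\<^esub> w = (fst z \<otimes>\<^bsub>M1\<^esub> fst w, snd z \<otimes>\<^bsub>M2\<^esub> snd w)"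
  by (simp add: pullback_def mult_DirProd')
lemma pb_one: "\<one>\<^bsub>pullback M1 M2 f1 f2\<^esub> = (\<one>\<^bsub>M1\<^esub>, \<one>\<^bsub>M2\<^esub>)"
  by (simp add: pullback_def)

locale pb = s1: fside M1 N1 S f1 + s2: fside M2 N2 S f2
  for M1 :: "'a monoid" and N1 and M2 :: "'b monoid" and N2 and S :: "'s monoid" and f1 f2 +
  assumes prim1: "primitive M1" and prim2: "primitive M2"
begin

abbreviation "PB \<equiv> pullback M1 M2 f1 f2"
abbreviation "NN \<equiv> N1 \<times> N2"

lemma NN_PB: assumes "z \<in> NN" shows "z \<in> carrier PB"
proof -
  have "fst z \<in> N1" "snd z \<in> N2" using assms by auto
  then have "fst z \<in> carrier M1" "snd z \<in> carrier M2" "f1 (fst z) = \<one>\<^bsub>S\<^esub>" "f2 (snd z) = \<one>\<^bsub>S\<^esub>"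
    using s1.f_one_iff s2.f_one_iff s1.inN s2.inN by auto
  then show ?thesis by (simp add: pb_carrier)
qed

lemma PB_N_iff: assumes "z \<in> carrier PB" shows "(fst z \<in> N1) = (snd z \<in> N2)"
proof -
  have "fst z \<in> carrier M1" "snd z \<in> carrier M2" "f1 (fst z) = f2 (snd z)" using assms by (auto simp: pb_carrier)
  then show ?thesis using s1.f_one_iff[of "fst z"] s2.f_one_iff[of "snd z"] by simp
qed

lemma PB_NN_iff: "z \<in> carrier PB \<Longrightarrow> (z \<in> NN) = (fst z \<in> N1)"
  using PB_N_iff by (cases z) auto

lemma PB_comm: "comm_monoid PB"
proof (rule comm_monoidI)
  fix x y assume "x \<in> carrier PB" "y \<in> carrier PB"
  then show "x \<otimes>\<^bsub>PB\<^esub> y \<in> carrier PB" by (simp add: pb_carrier pb_mult s1.f_mult s2.f_mult)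
next
  show "\<one>\<^bsub>PB\<^esub> \<in> carrier PB" by (simp add: pb_carrier pb_one s1.f_one s2.f_one)
next
  fix x y z assume "x \<in> carrier PB" "y \<in> carrier PB" "z \<in> carrier PB"
  then show "x \<otimes>\<^bsub>PB\<^esub> y \<otimes>\<^bsub>PB\<^esub> z = x \<otimes>\<^bsub>PB\<^esub> (y \<otimes>\<^bsub>PB\<^esub> z)"
    by (simp add: pb_carrier pb_mult s1.m_assoc s2.m_assoc)
next
  fix x assume "x \<in> carrier PB" then show "\<one>\<^bsub>PB\<^esub> \<otimes>\<^bsub>PB\<^esub> x = x"
    by (simp add: pb_carrier pb_mult pb_one)
next
  fix x y assume "x \<in> carrier PB" "y \<in> carrier PB"
  then show "x \<otimes>\<^bsub>PB\<^esub> y = y \<otimes>\<^bsub>PB\<^esub> x" by (simp add: pb_carrier pb_mult s1.m_comm s2.m_comm)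
qed

lemma PB_oi: "order_ideal PB NN"
  unfolding order_ideal_def
proof (intro conjI ballI)
  show "NN \<subseteq> carrier PB" using NN_PB by auto
  show "NN \<noteq> {}" using s1.one_N s2.one_N by auto
  fix x y assume "x \<in> carrier PB" "y \<in> carrier PB"
  then show "(x \<otimes>\<^bsub>PB\<^esub> y \<in> NN) = (x \<in> NN \<and> y \<in> NN)"
    using s1.mult_N s2.mult_N by (cases x, cases y) (auto simp: pb_carrier pb_mult)
qed

lemma PB_notNN: "z \<in> carrier PB \<Longrightarrow> z \<notin> NN \<Longrightarrow> fst z \<notin> N1 \<and> snd z \<notin> N2"
  using PB_N_iff PB_NN_iff by auto

lemma PB_absorb: "x \<in> carrier PB \<Longrightarrow> x \<notin> NN \<Longrightarrow> n \<in> NN \<Longrightarrow> x \<otimes>\<^bsub>PB\<^esub> n = x"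
  using PB_notNN[of x] s1.absorb s2.absorb by (cases n) (auto simp: pb_carrier pb_mult)

lemma PB_absorbing: "absorbing PB NN"
  using PB_comm PB_oi PB_absorb
  by (simp add: absorbing_def absorbing_axioms_def oideal_def oideal_axioms_def)


lemma prim_antisym: "x \<in> carrier M1 \<Longrightarrow> aleq M1 x \<one>\<^bsub>M1\<^esub> \<Longrightarrow> x = \<one>\<^bsub>M1\<^esub>"
proof -
  assume x: "x \<in> carrier M1" "aleq M1 x \<one>\<^bsub>M1\<^esub>"
  have "aleq M1 \<one>\<^bsub>M1\<^esub> x" using x unfolding aleq_def by (metis s1.l_one)
  then show ?thesis using prim1 x unfolding primitive_def antisymmetric_monoid_def by simp
qed
lemma prim_antisym2: "x \<in> carrier M2 \<Longrightarrow> aleq M2 x \<one>\<^bsub>M2\<^esub> \<Longrightarrow> x = \<one>\<^bsub>M2\<^esub>"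
proof -
  assume x: "x \<in> carrier M2" "aleq M2 x \<one>\<^bsub>M2\<^esub>"
  have "aleq M2 \<one>\<^bsub>M2\<^esub> x" using x unfolding aleq_def by (metis s2.l_one)
  then show ?thesis using prim2 x unfolding primitive_def antisymmetric_monoid_def by simp
qed

definition lift :: "'a \<Rightarrow> 'b" where "lift x = (SOME y. y \<in> carrier M2 \<and> f2 y = f1 x)"

lemma lift: assumes "x \<in> carrier M1" shows "lift x \<in> carrier M2" "f2 (lift x) = f1 x"
proof -
  have "f1 x \<in> f2 ` carrier M2" using s1.f_closed[OF assms] s2.fonto by simp
  then have "\<exists>y. y \<in> carrier M2 \<and> f2 y = f1 x" by (metis imageE)
  then have "lift x \<in> carrier M2 \<and> f2 (lift x) = f1 x" unfolding lift_def by (rule someI_ex)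
  then show "lift x \<in> carrier M2" "f2 (lift x) = f1 x" by auto
qed

lemma lift_PB: "x \<in> carrier M1 \<Longrightarrow> (x, lift x) \<in> carrier PB"
  using lift by (simp add: pb_carrier)

end

sublocale pb \<subseteq> P: absorbing "pullback M1 M2 f1 f2" "N1 \<times> N2"
  by (rule PB_absorbing)

context pb begin

lemma aleqN: assumes "z \<in> NN" "w \<in> NN"
  shows "aleq PB z w = (aleq M1 (fst z) (fst w) \<and> aleq M2 (snd z) (snd w))"
proof
  assume "aleq PB z w"
  then obtain u where "u \<in> carrier PB" "w = z \<otimes>\<^bsub>PB\<^esub> u" unfolding aleq_def by blast
  then show "aleq M1 (fst z) (fst w) \<and> aleq M2 (snd z) (snd w)"
    unfolding aleq_def by (auto simp: pb_mult pb_carrier)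
next
  assume "aleq M1 (fst z) (fst w) \<and> aleq M2 (snd z) (snd w)"
  then obtain c d where cd: "c \<in> carrier M1" "fst w = fst z \<otimes>\<^bsub>M1\<^esub> c" "d \<in> carrier M2" "snd w = snd z \<otimes>\<^bsub>M2\<^esub> d"
    unfolding aleq_def by blast
  have "c \<in> N1" using cd assms s1.mult_N[of "fst z" c] s1.inN by auto
  moreover have "d \<in> N2" using cd assms s2.mult_N[of "snd z" d] s2.inN by auto
  ultimately have "(c, d) \<in> carrier PB" using NN_PB by auto
  moreover have "w = z \<otimes>\<^bsub>PB\<^esub> (c, d)" using cd by (simp add: pb_mult prod_eq_iff)
  ultimately show "aleq PB z w" unfolding aleq_def by blast
qed

lemma aleqNK: assumes "z \<in> NN" "w \<in> carrier PB" "w \<notin> NN" shows "aleq PB z w"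
proof -
  have "z \<otimes>\<^bsub>PB\<^esub> w = w" using P.absorb' assms by simp
  then show ?thesis using assms unfolding aleq_def by metis
qed

lemma aleqK: assumes "z \<in> carrier PB" "z \<notin> NN" "w \<in> carrier PB"
  shows "aleq PB z w = aleq M1 (fst z) (fst w)"
proof
  assume "aleq PB z w"
  then obtain u where "u \<in> carrier PB" "w = z \<otimes>\<^bsub>PB\<^esub> u" unfolding aleq_def by blast
  then show "aleq M1 (fst z) (fst w)" unfolding aleq_def by (auto simp: pb_mult pb_carrier)
next
  assume "aleq M1 (fst z) (fst w)"
  then obtain c where c: "c \<in> carrier M1" "fst w = fst z \<otimes>\<^bsub>M1\<^esub> c" unfolding aleq_def by blast
  have zc: "fst z \<in> carrier M1" "snd z \<in> carrier M2" "f1 (fst z) = f2 (snd z)" using assms by (auto simp: pb_carrier)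
  have wc: "fst w \<in> carrier M1" "snd w \<in> carrier M2" "f1 (fst w) = f2 (snd w)" using assms by (auto simp: pb_carrier)
  have zn: "snd z \<notin> N2" using PB_notNN assms by auto
  have l: "lift c \<in> carrier M2" "f2 (lift c) = f1 c" using lift c by auto
  have "snd z \<otimes>\<^bsub>M2\<^esub> lift c \<notin> N2" using s2.mult_N zn zc l by simp
  moreover have "f2 (snd z \<otimes>\<^bsub>M2\<^esub> lift c) = f2 (snd w)"
    using s2.f_mult[OF zc(2) l(1)] l zc wc c s1.f_mult[OF zc(1) c(1)] by simp
  ultimately have "snd z \<otimes>\<^bsub>M2\<^esub> lift c = snd w" using s2.f_inj zc l wc by simp
  then have "w = z \<otimes>\<^bsub>PB\<^esub> (c, lift c)" using c by (simp add: pb_mult prod_eq_iff)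
  then show "aleq PB z w" using lift_PB c unfolding aleq_def by blast
qed

lemma primeK: assumes "z \<in> carrier PB" "z \<notin> NN"
  shows "is_prime PB z = is_prime M1 (fst z)"
proof -
  have zc: "fst z \<in> carrier M1" using assms by (simp add: pb_carrier)
  have one: "\<one>\<^bsub>PB\<^esub> \<in> carrier PB" by (rule P.one_closed)
  have A: "aleq PB z \<one>\<^bsub>PB\<^esub> = aleq M1 (fst z) \<one>\<^bsub>M1\<^esub>" using aleqK[OF assms one] by (simp add: pb_one)
  have B: "(\<forall>a\<in>carrier PB. \<forall>b\<in>carrier PB. aleq PB z (a \<otimes>\<^bsub>PB\<^esub> b) \<longrightarrow> aleq PB z a \<or> aleq PB z b)
     = (\<forall>a\<in>carrier M1. \<forall>b\<in>carrier M1. aleq M1 (fst z) (a \<otimes>\<^bsub>M1\<^esub> b) \<longrightarrow> aleq M1 (fst z) a \<or> aleq M1 (fst z) b)"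
  proof
    assume h: "\<forall>a\<in>carrier PB. \<forall>b\<in>carrier PB. aleq PB z (a \<otimes>\<^bsub>PB\<^esub> b) \<longrightarrow> aleq PB z a \<or> aleq PB z b"
    show "\<forall>a\<in>carrier M1. \<forall>b\<in>carrier M1. aleq M1 (fst z) (a \<otimes>\<^bsub>M1\<^esub> b) \<longrightarrow> aleq M1 (fst z) a \<or> aleq M1 (fst z) b"
    proof (intro ballI impI)
      fix a b assume ab: "a \<in> carrier M1" "b \<in> carrier M1" "aleq M1 (fst z) (a \<otimes>\<^bsub>M1\<^esub> b)"
      have pa: "(a, lift a) \<in> carrier PB" "(b, lift b) \<in> carrier PB" using lift_PB ab by auto
      then have "(a, lift a) \<otimes>\<^bsub>PB\<^esub> (b, lift b) \<in> carrier PB" by (rule P.m_closed)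
      then have "aleq PB z ((a, lift a) \<otimes>\<^bsub>PB\<^esub> (b, lift b))" using aleqK[OF assms] ab by (simp add: pb_mult)
      then have "aleq PB z (a, lift a) \<or> aleq PB z (b, lift b)" using h pa by blast
      then show "aleq M1 (fst z) a \<or> aleq M1 (fst z) b" using aleqK[OF assms] pa by auto
    qed
  next
    assume h: "\<forall>a\<in>carrier M1. \<forall>b\<in>carrier M1. aleq M1 (fst z) (a \<otimes>\<^bsub>M1\<^esub> b) \<longrightarrow> aleq M1 (fst z) a \<or> aleq M1 (fst z) b"
    show "\<forall>a\<in>carrier PB. \<forall>b\<in>carrier PB. aleq PB z (a \<otimes>\<^bsub>PB\<^esub> b) \<longrightarrow> aleq PB z a \<or> aleq PB z b"
    proof (intro ballI impI)
      fix a b assume ab: "a \<in> carrier PB" "b \<in> carrier PB" "aleq PB z (a \<otimes>\<^bsub>PB\<^esub> b)"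
      have "a \<otimes>\<^bsub>PB\<^esub> b \<in> carrier PB" using ab by (simp add: P.m_closed)
      then have "aleq M1 (fst z) (fst a \<otimes>\<^bsub>M1\<^esub> fst b)" using aleqK[OF assms] ab by (simp add: pb_mult)
      moreover have "fst a \<in> carrier M1" "fst b \<in> carrier M1" using ab by (auto simp: pb_carrier)
      ultimately have "aleq M1 (fst z) (fst a) \<or> aleq M1 (fst z) (fst b)" using h by blast
      then show "aleq PB z a \<or> aleq PB z b" using aleqK[OF assms] ab by auto
    qed
  qed
  show ?thesis unfolding is_prime_def using A B assms zc by simp
qed


lemma one_NN: "\<one>\<^bsub>PB\<^esub> \<in> NN" using s1.one_N s2.one_N by (simp add: pb_one)

lemma aleq_one1: "x \<in> carrier M1 \<Longrightarrow> aleq M1 \<one>\<^bsub>M1\<^esub> x" unfolding aleq_def by (metis s1.l_one)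
lemma aleq_one2: "x \<in> carrier M2 \<Longrightarrow> aleq M2 \<one>\<^bsub>M2\<^esub> x" unfolding aleq_def by (metis s2.l_one)

lemma primeN1: assumes z: "z \<in> NN" "snd z = \<one>\<^bsub>M2\<^esub>" "is_prime M1 (fst z)"
  shows "is_prime PB z"
proof -
  have zc: "z \<in> carrier PB" using NN_PB z by simp
  have "\<not> aleq PB z \<one>\<^bsub>PB\<^esub>" using aleqN[OF z(1) one_NN] z(3) by (simp add: pb_one is_prime_def)
  moreover have "aleq PB z a \<or> aleq PB z b" if ab: "a \<in> carrier PB" "b \<in> carrier PB" "aleq PB z (a \<otimes>\<^bsub>PB\<^esub> b)" for a b
  proof (cases "a \<in> NN \<and> b \<in> NN")
    case False
    then show ?thesis using aleqNK[OF z(1) ab(1)] aleqNK[OF z(1) ab(2)] by blast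
  next
    case True
    then have "a \<otimes>\<^bsub>PB\<^esub> b \<in> NN" using P.mult_N ab by simp
    then have "aleq M1 (fst z) (fst a \<otimes>\<^bsub>M1\<^esub> fst b)" using aleqN[OF z(1)] ab by (simp add: pb_mult)
    moreover have "fst a \<in> carrier M1" "fst b \<in> carrier M1" using ab by (auto simp: pb_carrier)
    ultimately have "aleq M1 (fst z) (fst a) \<or> aleq M1 (fst z) (fst b)" using z(3) unfolding is_prime_def by blast
    moreover have "aleq M2 (snd z) (snd a)" "aleq M2 (snd z) (snd b)" using z(2) aleq_one2 ab by (auto simp: pb_carrier)
    ultimately show ?thesis using aleqN[OF z(1)] True by auto
  qed
  ultimately show ?thesis using zc unfolding is_prime_def by blast
qed

lemma primeN2: assumes z: "z \<in> NN" "fst z = \<one>\<^bsub>M1\<^esub>" "is_prime M2 (snd z)"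
  shows "is_prime PB z"
proof -
  have zc: "z \<in> carrier PB" using NN_PB z by simp
  have "\<not> aleq PB z \<one>\<^bsub>PB\<^esub>" using aleqN[OF z(1) one_NN] z(3) by (simp add: pb_one is_prime_def)
  moreover have "aleq PB z a \<or> aleq PB z b" if ab: "a \<in> carrier PB" "b \<in> carrier PB" "aleq PB z (a \<otimes>\<^bsub>PB\<^esub> b)" for a b
  proof (cases "a \<in> NN \<and> b \<in> NN")
    case False
    then show ?thesis using aleqNK[OF z(1) ab(1)] aleqNK[OF z(1) ab(2)] by blast
  next
    case True
    then have "a \<otimes>\<^bsub>PB\<^esub> b \<in> NN" using P.mult_N ab by simp
    then have "aleq M2 (snd z) (snd a \<otimes>\<^bsub>M2\<^esub> snd b)" using aleqN[OF z(1)] ab by (simp add: pb_mult)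
    moreover have "snd a \<in> carrier M2" "snd b \<in> carrier M2" using ab by (auto simp: pb_carrier)
    ultimately have "aleq M2 (snd z) (snd a) \<or> aleq M2 (snd z) (snd b)" using z(3) unfolding is_prime_def by blast
    moreover have "aleq M1 (fst z) (fst a)" "aleq M1 (fst z) (fst b)" using z(2) aleq_one1 ab by (auto simp: pb_carrier)
    ultimately show ?thesis using aleqN[OF z(1)] True by auto
  qed
  ultimately show ?thesis using zc unfolding is_prime_def by blast
qed

lemma primeN_dest: assumes z: "z \<in> NN" "is_prime PB z"
  shows "(snd z = \<one>\<^bsub>M2\<^esub> \<and> is_prime M1 (fst z)) \<or> (fst z = \<one>\<^bsub>M1\<^esub> \<and> is_prime M2 (snd z))"
proof -
  obtain a b where ab: "z = (a, b)" "a \<in> N1" "b \<in> N2" using z by auto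
  have abc: "a \<in> carrier M1" "b \<in> carrier M2" using ab s1.inN s2.inN by auto
  have nz1: "\<not> aleq PB z \<one>\<^bsub>PB\<^esub>" using z unfolding is_prime_def by blast
  have pr: "aleq PB z x \<or> aleq PB z y" if "x \<in> carrier PB" "y \<in> carrier PB" "aleq PB z (x \<otimes>\<^bsub>PB\<^esub> y)" for x y
    using z that unfolding is_prime_def by blast
  have a1: "(a, \<one>\<^bsub>M2\<^esub>) \<in> NN" "(\<one>\<^bsub>M1\<^esub>, b) \<in> NN" using ab s1.one_N s2.one_N by auto
  have ab1: "a = \<one>\<^bsub>M1\<^esub> \<or> b = \<one>\<^bsub>M2\<^esub>"
  proof -
    have e: "z = (a, \<one>\<^bsub>M2\<^esub>) \<otimes>\<^bsub>PB\<^esub> (\<one>\<^bsub>M1\<^esub>, b)" using ab abc by (simp add: pb_mult)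
    have "aleq PB z z" using z NN_PB unfolding aleq_def by (metis P.one_closed P.r_one)
    then have "aleq PB z (a, \<one>\<^bsub>M2\<^esub>) \<or> aleq PB z (\<one>\<^bsub>M1\<^esub>, b)" using pr[of "(a, \<one>\<^bsub>M2\<^esub>)" "(\<one>\<^bsub>M1\<^esub>, b)"] e a1 NN_PB by simp
    then have "aleq M2 b \<one>\<^bsub>M2\<^esub> \<or> aleq M1 a \<one>\<^bsub>M1\<^esub>" using aleqN[OF z(1)] a1 ab by auto
    then show ?thesis using prim_antisym prim_antisym2 abc by blast
  qed
  show ?thesis
  proof (cases "b = \<one>\<^bsub>M2\<^esub>")
    case True
    have "\<not> aleq M1 a \<one>\<^bsub>M1\<^esub>" using nz1 aleqN[OF z(1) one_NN] ab True aleq_one2 by (simp add: pb_one)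
    moreover have "aleq M1 a x \<or> aleq M1 a y" if xy: "x \<in> carrier M1" "y \<in> carrier M1" "aleq M1 a (x \<otimes>\<^bsub>M1\<^esub> y)" for x y
    proof (cases "x \<in> N1 \<and> y \<in> N1")
      case False
      then show ?thesis
      proof (cases "x \<in> N1")
        case False
        then have "x = a \<otimes>\<^bsub>M1\<^esub> x" using s1.absorb' ab xy by simp
        then show ?thesis using xy unfolding aleq_def by blast
      next
        case True
        then have "y \<notin> N1" using False by simp
        then have "y = a \<otimes>\<^bsub>M1\<^esub> y" using s1.absorb' ab xy by simp
        then show ?thesis using xy unfolding aleq_def by blast
      qed
    next
      case True
      then have n: "(x, \<one>\<^bsub>M2\<^esub>) \<in> NN" "(y, \<one>\<^bsub>M2\<^esub>) \<in> NN" using s2.one_N by auto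
      have "(x, \<one>\<^bsub>M2\<^esub>) \<otimes>\<^bsub>PB\<^esub> (y, \<one>\<^bsub>M2\<^esub>) = (x \<otimes>\<^bsub>M1\<^esub> y, \<one>\<^bsub>M2\<^esub>)" by (simp add: pb_mult)
      moreover have "(x \<otimes>\<^bsub>M1\<^esub> y, \<one>\<^bsub>M2\<^esub>) \<in> NN" using True xy s1.mult_N s2.one_N by simp
      ultimately have "aleq PB z ((x, \<one>\<^bsub>M2\<^esub>) \<otimes>\<^bsub>PB\<^esub> (y, \<one>\<^bsub>M2\<^esub>))"
        using aleqN[OF z(1)] xy ab \<open>b = \<one>\<^bsub>M2\<^esub>\<close> aleq_one2 by simp
      then have "aleq PB z (x, \<one>\<^bsub>M2\<^esub>) \<or> aleq PB z (y, \<one>\<^bsub>M2\<^esub>)" using pr n NN_PB by simp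
      then show ?thesis using aleqN[OF z(1)] n ab by auto
    qed
    ultimately show ?thesis using True ab abc unfolding is_prime_def by auto
  next
    case False
    then have a0: "a = \<one>\<^bsub>M1\<^esub>" using ab1 by simp
    have "\<not> aleq M2 b \<one>\<^bsub>M2\<^esub>" using nz1 aleqN[OF z(1) one_NN] ab a0 aleq_one1 by (simp add: pb_one)
    moreover have "aleq M2 b x \<or> aleq M2 b y" if xy: "x \<in> carrier M2" "y \<in> carrier M2" "aleq M2 b (x \<otimes>\<^bsub>M2\<^esub> y)" for x y
    proof (cases "x \<in> N2 \<and> y \<in> N2")
      case False
      then show ?thesis
      proof (cases "x \<in> N2")
        case False
        then have "x = b \<otimes>\<^bsub>M2\<^esub> x" using s2.absorb' ab xy by simp
        then show ?thesis using xy unfolding aleq_def by blast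
      next
        case True
        then have "y \<notin> N2" using False by simp
        then have "y = b \<otimes>\<^bsub>M2\<^esub> y" using s2.absorb' ab xy by simp
        then show ?thesis using xy unfolding aleq_def by blast
      qed
    next
      case True
      then have n: "(\<one>\<^bsub>M1\<^esub>, x) \<in> NN" "(\<one>\<^bsub>M1\<^esub>, y) \<in> NN" using s1.one_N by auto
      have "(\<one>\<^bsub>M1\<^esub>, x) \<otimes>\<^bsub>PB\<^esub> (\<one>\<^bsub>M1\<^esub>, y) = (\<one>\<^bsub>M1\<^esub>, x \<otimes>\<^bsub>M2\<^esub> y)" by (simp add: pb_mult)
      moreover have "(\<one>\<^bsub>M1\<^esub>, x \<otimes>\<^bsub>M2\<^esub> y) \<in> NN" using True xy s2.mult_N s1.one_N by simp
      ultimately have "aleq PB z ((\<one>\<^bsub>M1\<^esub>, x) \<otimes>\<^bsub>PB\<^esub> (\<one>\<^bsub>M1\<^esub>, y))"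
        using aleqN[OF z(1)] xy ab a0 aleq_one1 by simp
      then have "aleq PB z (\<one>\<^bsub>M1\<^esub>, x) \<or> aleq PB z (\<one>\<^bsub>M1\<^esub>, y)" using pr n NN_PB by simp
      then show ?thesis using aleqN[OF z(1)] n ab by auto
    qed
    ultimately show ?thesis using a0 ab abc unfolding is_prime_def by auto
  qed
qed

end



definition refines :: "'a monoid \<Rightarrow> 'a \<Rightarrow> 'a \<Rightarrow> 'a \<Rightarrow> 'a \<Rightarrow> bool" where
  "refines M a0 a1 b0 b1 \<longleftrightarrow> (\<exists>c00\<in>carrier M. \<exists>c01\<in>carrier M. \<exists>c10\<in>carrier M. \<exists>c11\<in>carrier M.
           a0 = c00 \<otimes>\<^bsub>M\<^esub> c01 \<and> a1 = c10 \<otimes>\<^bsub>M\<^esub> c11 \<and>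
           b0 = c00 \<otimes>\<^bsub>M\<^esub> c10 \<and> b1 = c01 \<otimes>\<^bsub>M\<^esub> c11)"

lemma refinesI: "c00 \<in> carrier M \<Longrightarrow> c01 \<in> carrier M \<Longrightarrow> c10 \<in> carrier M \<Longrightarrow> c11 \<in> carrier M \<Longrightarrow>
  a0 = c00 \<otimes>\<^bsub>M\<^esub> c01 \<Longrightarrow> a1 = c10 \<otimes>\<^bsub>M\<^esub> c11 \<Longrightarrow> b0 = c00 \<otimes>\<^bsub>M\<^esub> c10 \<Longrightarrow> b1 = c01 \<otimes>\<^bsub>M\<^esub> c11 \<Longrightarrow>
  refines M a0 a1 b0 b1"
  unfolding refines_def by blast

lemma refinement_iff: "refinement_monoid M \<longleftrightarrow> (\<forall>a0\<in>carrier M. \<forall>a1\<in>carrier M. \<forall>b0\<in>carrier M. \<forall>b1\<in>carrier M.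
        a0 \<otimes>\<^bsub>M\<^esub> a1 = b0 \<otimes>\<^bsub>M\<^esub> b1 \<longrightarrow> refines M a0 a1 b0 b1)"
  unfolding refinement_monoid_def refines_def by simp

context absorbing begin

lemma refine_absorb:
  assumes RN: "\<And>a0 a1 b0 b1. a0 \<in> N \<Longrightarrow> a1 \<in> N \<Longrightarrow> b0 \<in> N \<Longrightarrow> b1 \<in> N \<Longrightarrow> a0 \<otimes> a1 = b0 \<otimes> b1 \<Longrightarrow> refines M a0 a1 b0 b1"
    and RK: "\<And>a0 a1 b0 b1. a0 \<in> carrier M - N \<Longrightarrow> a1 \<in> carrier M - N \<Longrightarrow> b0 \<in> carrier M - N \<Longrightarrow> b1 \<in> carrier M - N
       \<Longrightarrow> a0 \<otimes> a1 = b0 \<otimes> b1 \<Longrightarrow> refines M a0 a1 b0 b1"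
  shows "refinement_monoid M"
  unfolding refinement_iff
proof (intro ballI impI)
  fix a0 a1 b0 b1 assume c: "a0 \<in> carrier M" "a1 \<in> carrier M" "b0 \<in> carrier M" "b1 \<in> carrier M"
    and e: "a0 \<otimes> a1 = b0 \<otimes> b1"
  show "refines M a0 a1 b0 b1"
  proof (cases "a0 \<otimes> a1 \<in> N")
    case True
    then have "b0 \<otimes> b1 \<in> N" using e by simp
    then have "b0 \<in> N" "b1 \<in> N" using mult_N c by auto
    moreover have "a0 \<in> N" "a1 \<in> N" using True mult_N c by auto
    ultimately show ?thesis using RN e by simp
  next
    case False
    then have na: "\<not> (a0 \<in> N \<and> a1 \<in> N)" using mult_N c by simp
    have "b0 \<otimes> b1 \<notin> N" using False e by simp
    then have nb: "\<not> (b0 \<in> N \<and> b1 \<in> N)" using mult_N c by simp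
    have ab: "x \<otimes> n = x" "n \<otimes> x = x" if "x \<in> carrier M" "x \<notin> N" "n \<in> N" for x n
      using absorb absorb' that by auto
    show ?thesis
    proof (cases "a0 \<in> N")
      case a0: True
      then have a1: "a1 \<notin> N" using na by simp
      show ?thesis
      proof (cases "b0 \<in> N")
        case b0: True
        then have b1: "b1 \<notin> N" using nb by simp
        have "a1 = b1" using e ab a0 a1 b0 b1 c by simp
        then show ?thesis by (intro refinesI[of \<one> M a0 b0 a1]) (use c ab a0 a1 b0 b1 e in simp_all)
      next
        case b0: False
        show ?thesis
        proof (cases "b1 \<in> N")
          case b1: True
          have "a1 = b0" using e ab a0 a1 b0 b1 c by simp
          then show ?thesis by (intro refinesI[of a0 M \<one> a1 b1]) (use c ab a0 a1 b0 b1 e in simp_all)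
        next
          case b1: False
          have "a1 = b0 \<otimes> b1" using e ab a0 a1 b0 b1 c by simp
          then show ?thesis by (intro refinesI[of a0 M \<one> b0 b1]) (use c ab a0 a1 b0 b1 e in simp_all)
        qed
      qed
    next
      case a0: False
      show ?thesis
      proof (cases "a1 \<in> N")
        case a1: True
        show ?thesis
        proof (cases "b0 \<in> N")
          case b0: True
          then have b1: "b1 \<notin> N" using nb by simp
          have "a0 = b1" using e ab a0 a1 b0 b1 c by simp
          then show ?thesis by (intro refinesI[of b0 M a0 \<one> a1]) (use c ab a0 a1 b0 b1 e in simp_all)
        next
          case b0: False
          show ?thesis
          proof (cases "b1 \<in> N")
            case b1: True
            have "a0 = b0" using e ab a0 a1 b0 b1 c by simp
            then show ?thesis by (intro refinesI[of a0 M b1 a1 \<one>]) (use c ab a0 a1 b0 b1 e in simp_all)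
          next
            case b1: False
            have "a0 = b0 \<otimes> b1" using e ab a0 a1 b0 b1 c by simp
            then show ?thesis by (intro refinesI[of b0 M b1 a1 \<one>]) (use c ab a0 a1 b0 b1 e in simp_all)
          qed
        qed
      next
        case a1: False
        show ?thesis
        proof (cases "b0 \<in> N")
          case b0: True
          then have b1: "b1 \<notin> N" using nb by simp
          have "a0 \<otimes> a1 = b1" using e ab a0 a1 b0 b1 c by simp
          then show ?thesis by (intro refinesI[of b0 M a0 \<one> a1]) (use c ab a0 a1 b0 b1 e in simp_all)
        next
          case b0: False
          show ?thesis
          proof (cases "b1 \<in> N")
            case b1: True
            have "a0 \<otimes> a1 = b0" using e ab a0 a1 b0 b1 c by simp
            then show ?thesis by (intro refinesI[of a0 M b1 a1 \<one>]) (use c ab a0 a1 b0 b1 e in simp_all)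
          next
            case b1: False
            then show ?thesis using RK a0 a1 b0 b1 c e by simp
          qed
        qed
      qed
    qed
  qed
qed

end

lemma lsum_ones: "comm_monoid M \<Longrightarrow> lsum M (map (\<lambda>_. \<one>\<^bsub>M\<^esub>) ys) = \<one>\<^bsub>M\<^esub>"
  by (induction ys) (auto simp: comm_monoid_def monoid.l_one monoid.one_closed)

context absorbing begin
lemma lsum_filter: "set xs \<subseteq> carrier M \<Longrightarrow> lsum M xs \<notin> N \<Longrightarrow> lsum M (filter (\<lambda>p. p \<notin> N) xs) = lsum M xs"
proof (induction xs)
  case Nil then show ?case by simp
next
  case (Cons a xs)
  have ac: "a \<in> carrier M" "set xs \<subseteq> carrier M" using Cons.prems by auto
  have lc: "lsum M xs \<in> carrier M" using lsum_closed ac by simp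
  show ?case
  proof (cases "a \<in> N")
    case True
    then have "lsum M xs \<notin> N" using Cons.prems mult_N ac lc by auto
    then have "lsum M (a#xs) = lsum M xs" using absorb' True ac lc absorb by (simp add: m_comm)
    then show ?thesis using Cons True \<open>lsum M xs \<notin> N\<close> ac by simp
  next
    case False
    show ?thesis
    proof (cases "lsum M xs \<in> N")
      case True
      then have "set xs \<subseteq> N" using lsum_N ac by simp
      then have "filter (\<lambda>p. p \<notin> N) xs = []" by (auto simp: filter_empty_conv)
      then show ?thesis using False True absorb ac lc by simp
    next
      case nt: False
      then show ?thesis using Cons False ac by simp
    qed
  qed
qed
end

context pb begin

lemma lsum_PB: "lsum PB zs = (lsum M1 (map fst zs), lsum M2 (map snd zs))"
  by (induction zs) (auto simp: pb_one pb_mult)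

lemma PB_antisym: "antisymmetric_monoid PB"
  unfolding antisymmetric_monoid_def
proof (intro ballI impI)
  fix x y assume c: "x \<in> carrier PB" "y \<in> carrier PB" and h: "aleq PB x y \<and> aleq PB y x"
  have "\<exists>u\<in>carrier PB. y = x \<otimes>\<^bsub>PB\<^esub> u" using h unfolding aleq_def by simp
  then obtain u where u: "u \<in> carrier PB" "y = x \<otimes>\<^bsub>PB\<^esub> u" by (rule bexE)
  have "\<exists>v\<in>carrier PB. x = y \<otimes>\<^bsub>PB\<^esub> v" using h unfolding aleq_def by simp
  then obtain v where v: "v \<in> carrier PB" "x = y \<otimes>\<^bsub>PB\<^esub> v" by (rule bexE)
  have uv1: "fst y = fst x \<otimes>\<^bsub>M1\<^esub> fst u" "snd y = snd x \<otimes>\<^bsub>M2\<^esub> snd u"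
    using u(2) by (simp_all add: pb_mult)
  have uv2: "fst x = fst y \<otimes>\<^bsub>M1\<^esub> fst v" "snd x = snd y \<otimes>\<^bsub>M2\<^esub> snd v"
    using v(2) by (simp_all add: pb_mult)
  note uv = uv1(1) uv1(2) uv2(1) uv2(2)
  have uvc: "fst u \<in> carrier M1" "snd u \<in> carrier M2" "fst v \<in> carrier M1" "snd v \<in> carrier M2"
    using u v by (auto simp: pb_carrier)
  have a1: "aleq M1 (fst x) (fst y)" unfolding aleq_def using uv(1) uvc(1) by (rule bexI)
  have a2: "aleq M1 (fst y) (fst x)" unfolding aleq_def using uv(3) uvc(3) by (rule bexI)
  have a3: "aleq M2 (snd x) (snd y)" unfolding aleq_def using uv(2) uvc(2) by (rule bexI)
  have a4: "aleq M2 (snd y) (snd x)" unfolding aleq_def using uv(4) uvc(4) by (rule bexI)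
  have cc: "fst x \<in> carrier M1" "fst y \<in> carrier M1" "snd x \<in> carrier M2" "snd y \<in> carrier M2"
    using c by (auto simp: pb_carrier)
  have as1: "antisymmetric_monoid M1" "antisymmetric_monoid M2" using prim1 prim2 unfolding primitive_def by auto
  have "fst x = fst y" using as1(1) cc a1 a2 unfolding antisymmetric_monoid_def by simp
  moreover have "snd x = snd y" using as1(2) cc a3 a4 unfolding antisymmetric_monoid_def by simp
  ultimately have "fst x = fst y" "snd x = snd y" by auto
  then show "x = y" by (simp add: prod_eq_iff)
qed

lemma PB_pg: "primely_generated PB"
  unfolding primely_generated_def
proof
  fix z assume zc: "z \<in> carrier PB"
  have z1: "fst z \<in> carrier M1" "snd z \<in> carrier M2" "f1 (fst z) = f2 (snd z)" using zc by (auto simp: pb_carrier)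
  obtain xs where xs: "set xs \<subseteq> primes M1" "fst z = lsum M1 xs" using prim1 z1 unfolding primitive_def primely_generated_def by blast
  have xsc: "set xs \<subseteq> carrier M1" using xs(1) primes_carrier[of _ M1] by blast
  show "\<exists>zs. set zs \<subseteq> primes PB \<and> z = lsum PB zs"
  proof (cases "z \<in> NN")
    case True
    obtain ys where ys: "set ys \<subseteq> primes M2" "snd z = lsum M2 ys" using prim2 z1 unfolding primitive_def primely_generated_def by blast
    have ysc: "set ys \<subseteq> carrier M2" using ys(1) primes_carrier[of _ M2] by blast
    have xsN: "set xs \<subseteq> N1" using s1.lsum_N[OF xsc] xs True by auto
    have ysN: "set ys \<subseteq> N2" using s2.lsum_N[OF ysc] ys True by auto
    define zs where "zs = map (\<lambda>p. (p, \<one>\<^bsub>M2\<^esub>)) xs @ map (\<lambda>q. (\<one>\<^bsub>M1\<^esub>, q)) ys"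
    have "set zs \<subseteq> primes PB"
    proof
      fix w assume "w \<in> set zs"
      then consider p where "p \<in> set xs" "w = (p, \<one>\<^bsub>M2\<^esub>)" | q where "q \<in> set ys" "w = (\<one>\<^bsub>M1\<^esub>, q)"
        unfolding zs_def by auto
      then show "w \<in> primes PB"
      proof cases
        case 1
        then show ?thesis using primeN1[of w] xs xsN s2.one_N by (auto simp: primes_def)
      next
        case 2
        then show ?thesis using primeN2[of w] ys ysN s1.one_N by (auto simp: primes_def)
      qed
    qed
    moreover have "lsum PB zs = z"
    proof -
      have "map fst zs = xs @ map (\<lambda>_. \<one>\<^bsub>M1\<^esub>) ys" "map snd zs = map (\<lambda>_. \<one>\<^bsub>M2\<^esub>) xs @ ys"
        unfolding zs_def by (simp_all add: comp_def)
      moreover have "lsum M1 (xs @ map (\<lambda>_. \<one>\<^bsub>M1\<^esub>) ys) = lsum M1 xs"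
      proof -
        have o: "lsum M1 (map (\<lambda>_. \<one>\<^bsub>M1\<^esub>) ys) = \<one>\<^bsub>M1\<^esub>" by (rule lsum_ones[OF s1.comm_monoid_axioms])
        have "set (map (\<lambda>_. \<one>\<^bsub>M1\<^esub>) ys) \<subseteq> carrier M1" by auto
        then show ?thesis using s1.lsum_append[OF xsc] o s1.lsum_closed[OF xsc] by simp
      qed
      moreover have "lsum M2 (map (\<lambda>_. \<one>\<^bsub>M2\<^esub>) xs @ ys) = lsum M2 ys"
      proof -
        have o: "lsum M2 (map (\<lambda>_. \<one>\<^bsub>M2\<^esub>) xs) = \<one>\<^bsub>M2\<^esub>" by (rule lsum_ones[OF s2.comm_monoid_axioms])
        have "set (map (\<lambda>_. \<one>\<^bsub>M2\<^esub>) xs) \<subseteq> carrier M2" by auto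
        then show ?thesis using s2.lsum_append[OF _ ysc] o s2.lsum_closed[OF ysc] by simp
      qed
      ultimately show ?thesis using lsum_PB xs ys by (simp add: prod_eq_iff)
    qed
    ultimately show ?thesis by (intro exI[of _ zs]) simp
  next
    case False
    have zn: "fst z \<notin> N1" "snd z \<notin> N2" using PB_notNN zc False by auto
    define xs' where "xs' = filter (\<lambda>p. p \<notin> N1) xs"
    have xs'c: "set xs' \<subseteq> carrier M1" "set xs' \<subseteq> primes M1" using xsc xs unfolding xs'_def by auto
    have l1: "lsum M1 xs' = fst z" using s1.lsum_filter[OF xsc] xs zn unfolding xs'_def by simp
    define zs where "zs = map (\<lambda>p. (p, lift p)) xs'"
    have "set zs \<subseteq> primes PB"
    proof
      fix w assume "w \<in> set zs"
      then obtain p where p: "p \<in> set xs'" "w = (p, lift p)" unfolding zs_def by auto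
      have "w \<in> carrier PB" using lift_PB p xs'c by auto
      moreover have "w \<notin> NN" using p unfolding xs'_def by auto
      moreover have "is_prime M1 (fst w)" using p xs'c by (auto simp: primes_def)
      ultimately show "w \<in> primes PB" using primeK by (simp add: primes_def)
    qed
    moreover have "lsum PB zs = z"
    proof -
      have lc: "set (map lift xs') \<subseteq> carrier M2" using lift xs'c by auto
      have mm: "map f2 (map lift xs') = map f1 xs'" using lift xs'c by auto
      have "f2 (lsum M2 (map lift xs')) = lsum S (map f2 (map lift xs'))" by (rule s2.f_lsum[OF lc])
      also have "\<dots> = lsum S (map f1 xs')" by (simp only: mm)
      also have "\<dots> = f1 (lsum M1 xs')" by (rule s1.f_lsum[OF xs'c(1), symmetric])
      also have "\<dots> = f1 (fst z)" using l1 by simp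
      finally have "f2 (lsum M2 (map lift xs')) = f1 (fst z)" .
      then have "f2 (snd z) = f2 (lsum M2 (map lift xs'))" using z1(3) by simp
      then have sz: "snd z = lsum M2 (map lift xs')" by (rule s2.f_inj[OF z1(2) s2.lsum_closed[OF lc] zn(2)])
      have "lsum PB zs = (lsum M1 (map fst zs), lsum M2 (map snd zs))" by (rule lsum_PB)
      moreover have "map fst zs = xs'" "map snd zs = map lift xs'" unfolding zs_def by (simp_all add: comp_def)
      ultimately have "lsum PB zs = (fst z, snd z)" using l1 sz by simp
      then show ?thesis by simp
    qed
    ultimately show ?thesis by (intro exI[of _ zs]) simp
  qed
qed

lemma lift_eq: assumes "w \<in> carrier PB" "w \<notin> NN" "c \<in> carrier M1" "d \<in> carrier M1" "fst w = c \<otimes>\<^bsub>M1\<^esub> d"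
  shows "w = (c, lift c) \<otimes>\<^bsub>PB\<^esub> (d, lift d)"
proof -
  have wc: "fst w \<in> carrier M1" "snd w \<in> carrier M2" "f1 (fst w) = f2 (snd w)" using assms by (auto simp: pb_carrier)
  have wn: "snd w \<notin> N2" using PB_notNN assms by auto
  have l: "lift c \<in> carrier M2" "lift d \<in> carrier M2" "f2 (lift c) = f1 c" "f2 (lift d) = f1 d" using lift assms by auto
  have "f2 (lift c \<otimes>\<^bsub>M2\<^esub> lift d) = f2 (snd w)" using s2.f_mult l s1.f_mult assms wc by simp
  then have "snd w = lift c \<otimes>\<^bsub>M2\<^esub> lift d" using s2.f_inj[OF wc(2) _ wn] l by simp
  then show ?thesis using assms by (simp add: pb_mult prod_eq_iff)
qed

lemma PB_refine: "refinement_monoid PB"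
proof (rule P.refine_absorb)
  fix a0 a1 b0 b1 assume N: "a0 \<in> NN" "a1 \<in> NN" "b0 \<in> NN" "b1 \<in> NN" and e: "a0 \<otimes>\<^bsub>PB\<^esub> a1 = b0 \<otimes>\<^bsub>PB\<^esub> b1"
  have c1: "fst a0 \<in> carrier M1" "fst a1 \<in> carrier M1" "fst b0 \<in> carrier M1" "fst b1 \<in> carrier M1"
    using N s1.inN by auto
  have c2: "snd a0 \<in> carrier M2" "snd a1 \<in> carrier M2" "snd b0 \<in> carrier M2" "snd b1 \<in> carrier M2"
    using N s2.inN by auto
  have "fst a0 \<otimes>\<^bsub>M1\<^esub> fst a1 = fst b0 \<otimes>\<^bsub>M1\<^esub> fst b1" using e by (simp add: pb_mult prod_eq_iff)
  then have "refines M1 (fst a0) (fst a1) (fst b0) (fst b1)" using prim1 c1 unfolding primitive_def refinement_iff by blast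
  then obtain c00 c01 c10 c11 where c: "c00 \<in> carrier M1" "c01 \<in> carrier M1" "c10 \<in> carrier M1" "c11 \<in> carrier M1"
    "fst a0 = c00 \<otimes>\<^bsub>M1\<^esub> c01" "fst a1 = c10 \<otimes>\<^bsub>M1\<^esub> c11" "fst b0 = c00 \<otimes>\<^bsub>M1\<^esub> c10" "fst b1 = c01 \<otimes>\<^bsub>M1\<^esub> c11"
    unfolding refines_def by blast
  have "snd a0 \<otimes>\<^bsub>M2\<^esub> snd a1 = snd b0 \<otimes>\<^bsub>M2\<^esub> snd b1" using e by (simp add: pb_mult prod_eq_iff)
  then have "refines M2 (snd a0) (snd a1) (snd b0) (snd b1)" using prim2 c2 unfolding primitive_def refinement_iff by blast
  then obtain d00 d01 d10 d11 where d: "d00 \<in> carrier M2" "d01 \<in> carrier M2" "d10 \<in> carrier M2" "d11 \<in> carrier M2"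
    "snd a0 = d00 \<otimes>\<^bsub>M2\<^esub> d01" "snd a1 = d10 \<otimes>\<^bsub>M2\<^esub> d11" "snd b0 = d00 \<otimes>\<^bsub>M2\<^esub> d10" "snd b1 = d01 \<otimes>\<^bsub>M2\<^esub> d11"
    unfolding refines_def by blast
  have cN: "c00 \<in> N1" "c01 \<in> N1" "c10 \<in> N1" "c11 \<in> N1"
    using c N s1.mult_N by (metis mem_Sigma_iff prod.collapse)+
  have dN: "d00 \<in> N2" "d01 \<in> N2" "d10 \<in> N2" "d11 \<in> N2"
    using d N s2.mult_N by (metis mem_Sigma_iff prod.collapse)+
  show "refines PB a0 a1 b0 b1"
    by (rule refinesI[of "(c00,d00)" _ "(c01,d01)" "(c10,d10)" "(c11,d11)"]) (use cN dN NN_PB c d in \<open>simp_all add: pb_mult prod_eq_iff\<close>)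
next
  fix a0 a1 b0 b1 assume K: "a0 \<in> carrier PB - NN" "a1 \<in> carrier PB - NN" "b0 \<in> carrier PB - NN" "b1 \<in> carrier PB - NN"
    and e: "a0 \<otimes>\<^bsub>PB\<^esub> a1 = b0 \<otimes>\<^bsub>PB\<^esub> b1"
  have c1: "fst a0 \<in> carrier M1" "fst a1 \<in> carrier M1" "fst b0 \<in> carrier M1" "fst b1 \<in> carrier M1"
    using K by (auto simp: pb_carrier)
  have "fst a0 \<otimes>\<^bsub>M1\<^esub> fst a1 = fst b0 \<otimes>\<^bsub>M1\<^esub> fst b1" using e by (simp add: pb_mult prod_eq_iff)
  then have "refines M1 (fst a0) (fst a1) (fst b0) (fst b1)" using prim1 c1 unfolding primitive_def refinement_iff by blast
  then obtain c00 c01 c10 c11 where c: "c00 \<in> carrier M1" "c01 \<in> carrier M1" "c10 \<in> carrier M1" "c11 \<in> carrier M1"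
    "fst a0 = c00 \<otimes>\<^bsub>M1\<^esub> c01" "fst a1 = c10 \<otimes>\<^bsub>M1\<^esub> c11" "fst b0 = c00 \<otimes>\<^bsub>M1\<^esub> c10" "fst b1 = c01 \<otimes>\<^bsub>M1\<^esub> c11"
    unfolding refines_def by blast
  show "refines PB a0 a1 b0 b1"
    by (rule refinesI[of "(c00,lift c00)" _ "(c01,lift c01)" "(c10,lift c10)" "(c11,lift c11)"]) (use c lift_PB K lift_eq in auto)
qed

lemma PB_primitive: "primitive PB"
  unfolding primitive_def using PB_comm PB_pg PB_antisym PB_refine by simp

end



lemma prime_ne_one: "monoid M \<Longrightarrow> is_prime M x \<Longrightarrow> x \<noteq> \<one>\<^bsub>M\<^esub>"
proof
  assume m: "monoid M" and p: "is_prime M x" and x: "x = \<one>\<^bsub>M\<^esub>"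
  have "aleq M \<one>\<^bsub>M\<^esub> \<one>\<^bsub>M\<^esub>" unfolding aleq_def
    using monoid.one_closed[OF m] monoid.l_one[OF m monoid.one_closed[OF m]] by metis
  then show False using p x unfolding is_prime_def by simp
qed

context pb begin

definition gmap :: "'a \<times> 'b \<Rightarrow> 's + ('a + 'b)" where
  "gmap z = (if fst z \<notin> N1 then Inl (f1 (fst z)) else if snd z = \<one>\<^bsub>M2\<^esub> then Inr (Inl (fst z)) else Inr (Inr (snd z)))"

lemma prime_cases:
  assumes "p \<in> primes PB"
  obtains (K) "p \<in> carrier PB" "p \<notin> NN" "is_prime M1 (fst p)" "fst p \<notin> N1" "snd p \<notin> N2" "gmap p = Inl (f1 (fst p))"
  | (A) a where "p = (a, \<one>\<^bsub>M2\<^esub>)" "a \<in> N1" "is_prime M1 a" "a \<noteq> \<one>\<^bsub>M1\<^esub>" "gmap p = Inr (Inl a)"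
  | (B) b where "p = (\<one>\<^bsub>M1\<^esub>, b)" "b \<in> N2" "is_prime M2 b" "b \<noteq> \<one>\<^bsub>M2\<^esub>" "gmap p = Inr (Inr b)"
proof -
  have pp: "is_prime PB p" using assms by (simp add: primes_def)
  then have pc: "p \<in> carrier PB" by (simp add: is_prime_def)
  show ?thesis
  proof (cases "p \<in> NN")
    case False
    then have "fst p \<notin> N1" "snd p \<notin> N2" using PB_notNN pc by auto
    moreover have "is_prime M1 (fst p)" using primeK pc False pp by simp
    ultimately show ?thesis using K pc False by (simp add: gmap_def)
  next
    case True
    then have d: "(snd p = \<one>\<^bsub>M2\<^esub> \<and> is_prime M1 (fst p)) \<or> (fst p = \<one>\<^bsub>M1\<^esub> \<and> is_prime M2 (snd p))"
      using primeN_dest pp by simp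
    show ?thesis
    proof (cases "snd p = \<one>\<^bsub>M2\<^esub>")
      case True
      then have "is_prime M1 (fst p)" using d prime_ne_one[OF s2.monoid_axioms] by auto
      moreover have "fst p \<noteq> \<one>\<^bsub>M1\<^esub>" using prime_ne_one[OF s1.monoid_axioms] calculation by simp
      moreover have "fst p \<in> N1" using \<open>p \<in> NN\<close> by auto
      moreover have "p = (fst p, \<one>\<^bsub>M2\<^esub>)" using True by (simp add: prod_eq_iff)
      ultimately show ?thesis using A[of "fst p"] True by (simp add: gmap_def)
    next
      case False
      then have "is_prime M2 (snd p)" "fst p = \<one>\<^bsub>M1\<^esub>" using d by auto
      moreover have "snd p \<in> N2" using \<open>p \<in> NN\<close> by auto
      moreover have "p = (\<one>\<^bsub>M1\<^esub>, snd p)" using calculation by (simp add: prod_eq_iff)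
      ultimately show ?thesis using B[of "snd p"] False s1.one_N by (simp add: gmap_def)
    qed
  qed
qed

definition FF :: "'a \<times> 'b \<Rightarrow> 's" where "FF z = f1 (fst z)"

lemma FF_props: "FF \<in> hom PB S" "FF ` carrier PB = carrier S"
  "\<And>x y. x \<in> carrier PB \<Longrightarrow> y \<in> carrier PB \<Longrightarrow> (FF x = FF y) = qcong PB NN x y"
proof -
  show "FF \<in> hom PB S"
  proof (rule homI)
    fix x assume "x \<in> carrier PB" then have "fst x \<in> carrier M1" by (simp add: pb_carrier)
    then show "FF x \<in> carrier S" using s1.f_closed unfolding FF_def by blast
  next
    fix x y assume "x \<in> carrier PB" "y \<in> carrier PB"
    then show "FF (x \<otimes>\<^bsub>PB\<^esub> y) = FF x \<otimes>\<^bsub>S\<^esub> FF y" using s1.f_mult by (simp add: FF_def pb_carrier pb_mult)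
  qed
  show "FF ` carrier PB = carrier S"
  proof
    show "FF ` carrier PB \<subseteq> carrier S" using \<open>FF \<in> hom PB S\<close> unfolding hom_def by auto
  next
    show "carrier S \<subseteq> FF ` carrier PB"
    proof
      fix s assume "s \<in> carrier S"
      then have "s \<in> f1 ` carrier M1" using s1.fonto by simp
      then obtain x where x: "s = f1 x" "x \<in> carrier M1" by (rule imageE)
      then have "(x, lift x) \<in> carrier PB" "FF (x, lift x) = s" using lift_PB by (simp_all add: FF_def)
      then show "s \<in> FF ` carrier PB" by (metis image_eqI)
    qed
  qed
  fix x y assume xy: "x \<in> carrier PB" "y \<in> carrier PB"
  have c: "fst x \<in> carrier M1" "fst y \<in> carrier M1" "snd x \<in> carrier M2" "snd y \<in> carrier M2"
    "f1 (fst x) = f2 (snd x)" "f1 (fst y) = f2 (snd y)" using xy by (auto simp: pb_carrier)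
  have "(FF x = FF y) = ((fst x \<in> N1 \<and> fst y \<in> N1) \<or> fst x = fst y)"
    unfolding FF_def using s1.feq[of "fst x" "fst y"] s1.qcong_iff c by simp
  also have "\<dots> = ((x \<in> NN \<and> y \<in> NN) \<or> x = y)"
  proof
    assume h: "(fst x \<in> N1 \<and> fst y \<in> N1) \<or> fst x = fst y"
    show "(x \<in> NN \<and> y \<in> NN) \<or> x = y"
    proof (cases "fst x \<in> N1")
      case True
      then have "fst y \<in> N1" using h by auto
      then show ?thesis using True PB_NN_iff xy by simp
    next
      case False
      then have e: "fst x = fst y" using h by auto
      then have "f2 (snd x) = f2 (snd y)" using c by simp
      moreover have "snd x \<notin> N2" using False PB_N_iff xy by simp
      ultimately have "snd x = snd y" using s2.f_inj c by simp
      then show ?thesis using e by (simp add: prod_eq_iff)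
    qed
  next
    assume "(x \<in> NN \<and> y \<in> NN) \<or> x = y"
    then show "(fst x \<in> N1 \<and> fst y \<in> N1) \<or> fst x = fst y" by auto
  qed
  also have "\<dots> = qcong PB NN x y" using P.qcong_iff xy by simp
  finally show "(FF x = FF y) = qcong PB NN x y" .
qed


lemma psi_iso: "id \<in> iso (submon PB NN) (submon M1 N1 \<times>\<times> submon M2 N2)"
  unfolding iso_def mem_Collect_eq
proof (intro conjI)
  show "id \<in> hom (submon PB NN) (submon M1 N1 \<times>\<times> submon M2 N2)"
  proof (rule homI)
    fix x assume "x \<in> carrier (submon PB NN)"
    then show "id x \<in> carrier (submon M1 N1 \<times>\<times> submon M2 N2)" by simp
  next
    fix x y assume "x \<in> carrier (submon PB NN)" "y \<in> carrier (submon PB NN)"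
    show "id (x \<otimes>\<^bsub>submon PB NN\<^esub> y) = id x \<otimes>\<^bsub>submon M1 N1 \<times>\<times> submon M2 N2\<^esub> id y"
      by (simp add: submon_def pb_mult mult_DirProd')
  qed
  show "bij_betw id (carrier (submon PB NN)) (carrier (submon M1 N1 \<times>\<times> submon M2 N2))"
    by (simp add: bij_betw_def)
qed

abbreviation "TT \<equiv> Inl ` primes S \<union> Inr ` (Inl ` primes (submon M1 N1) \<union> Inr ` primes (submon M2 N2))"

lemma g_bij: "bij_betw gmap (primes PB) TT"
proof (rule bij_betw_imageI)
  show "inj_on gmap (primes PB)"
  proof (rule inj_onI)
    fix p q assume p: "p \<in> primes PB" and q: "q \<in> primes PB" and e: "gmap p = gmap q"
    show "p = q"
    using p proof (cases rule: prime_cases)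
      case K
      note pK = K
      show ?thesis
      using q proof (cases rule: prime_cases)
        case K
        have c: "fst p \<in> carrier M1" "fst q \<in> carrier M1" "snd p \<in> carrier M2" "snd q \<in> carrier M2"
          "f1 (fst p) = f2 (snd p)" "f1 (fst q) = f2 (snd q)" using pK K by (auto simp: pb_carrier)
        have "f1 (fst p) = f1 (fst q)" using e pK K by simp
        then have 1: "fst p = fst q" using s1.f_inj c pK by simp
        then have "f2 (snd p) = f2 (snd q)" using c by simp
        then have "snd p = snd q" using s2.f_inj c pK by simp
        then show ?thesis using 1 by (simp add: prod_eq_iff)
      qed (use e pK in auto)
    next
      case (A a)
      note pA = A
      show ?thesis
        using q by (cases rule: prime_cases) (use e pA in auto)
    next
      case (B b)
      note pB = B
      show ?thesis
        using q by (cases rule: prime_cases) (use e pB in auto)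
    qed
  qed
next
  show "gmap ` primes PB = TT"
  proof
    show "gmap ` primes PB \<subseteq> TT"
    proof
      fix t assume "t \<in> gmap ` primes PB"
      then obtain p where p: "p \<in> primes PB" "t = gmap p" by blast
      show "t \<in> TT"
      using p(1) proof (cases rule: prime_cases)
        case K
        then have "fst p \<in> primes M1 - N1" by (simp add: primes_def)
        then have "f1 (fst p) \<in> primes S" using s1.primes_S by simp
        then show ?thesis using K p by simp
      next
        case (A a)
        then have "a \<in> primes (submon M1 N1)" using s1.primes_sub_eq by (simp add: primes_def)
        then show ?thesis using A p by simp
      next
        case (B b)
        then have "b \<in> primes (submon M2 N2)" using s2.primes_sub_eq by (simp add: primes_def)
        then show ?thesis using B p by simp
      qed
    qed
  next
    show "TT \<subseteq> gmap ` primes PB"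
    proof
      fix t assume "t \<in> TT"
      then consider (1) x where "x \<in> primes M1 - N1" "t = Inl (f1 x)"
        | (2) a where "a \<in> primes M1 \<inter> N1" "t = Inr (Inl a)"
        | (3) b where "b \<in> primes M2 \<inter> N2" "t = Inr (Inr b)"
        using s1.primes_S s1.primes_sub_eq s2.primes_sub_eq by auto
      then show "t \<in> gmap ` primes PB"
      proof cases
        case 1
        then have xc: "x \<in> carrier M1" "is_prime M1 x" "x \<notin> N1" using primes_carrier by (auto simp: primes_def)
        have pc: "(x, lift x) \<in> carrier PB" using lift_PB xc by simp
        moreover have "(x, lift x) \<notin> NN" using xc by simp
        ultimately have "(x, lift x) \<in> primes PB" using primeK xc by (simp add: primes_def)
        moreover have "gmap (x, lift x) = t" using 1 xc by (simp add: gmap_def)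
        ultimately show ?thesis by (metis image_eqI)
      next
        case 2
        then have "(a, \<one>\<^bsub>M2\<^esub>) \<in> primes PB" using primeN1[of "(a, \<one>\<^bsub>M2\<^esub>)"] s2.one_N by (simp add: primes_def)
        moreover have "gmap (a, \<one>\<^bsub>M2\<^esub>) = t" using 2 by (simp add: gmap_def)
        ultimately show ?thesis by (metis image_eqI)
      next
        case 3
        then have "(\<one>\<^bsub>M1\<^esub>, b) \<in> primes PB" using primeN2[of "(\<one>\<^bsub>M1\<^esub>, b)"] s1.one_N by (simp add: primes_def)
        moreover have "b \<noteq> \<one>\<^bsub>M2\<^esub>" using 3 prime_ne_one[OF s2.monoid_axioms] by (simp add: primes_def)
        moreover have "gmap (\<one>\<^bsub>M1\<^esub>, b) = t" using 3 s1.one_N calculation by (simp add: gmap_def)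
        ultimately show ?thesis by (metis image_eqI)
      qed
    qed
  qed
qed


lemma g_lhd: assumes p: "p \<in> primes PB" and q: "q \<in> primes PB"
  shows "lhd PB p q = lhd_sum S (submon M1 N1) (submon M2 N2) (gmap p) (gmap q)"
  using p
proof (cases rule: prime_cases)
  case K
  note pK = K
  show ?thesis using q
  proof (cases rule: prime_cases)
    case K
    have c: "fst p \<in> carrier M1" "fst q \<in> carrier M1" "snd p \<in> carrier M2" "snd q \<in> carrier M2"
      "f1 (fst p) = f2 (snd p)" "f1 (fst q) = f2 (snd q)" using pK K by (auto simp: pb_carrier)
    have nq: "fst q \<otimes>\<^bsub>M1\<^esub> fst p \<notin> N1" using s1.mult_N c K by simp
    have R: "lhd S (f1 (fst p)) (f1 (fst q)) = (fst q \<otimes>\<^bsub>M1\<^esub> fst p = fst q)"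
    proof -
      have "lhd S (f1 (fst p)) (f1 (fst q)) = (f1 (fst q \<otimes>\<^bsub>M1\<^esub> fst p) = f1 (fst q))"
        unfolding lhd_def using s1.f_mult c by simp
      also have "\<dots> = (fst q \<otimes>\<^bsub>M1\<^esub> fst p = fst q)"
        using s1.f_inj[of "fst q \<otimes>\<^bsub>M1\<^esub> fst p" "fst q"] nq c by auto
      finally show ?thesis .
    qed
    have L: "lhd PB p q = (fst q \<otimes>\<^bsub>M1\<^esub> fst p = fst q)"
    proof
      assume "lhd PB p q"
      then show "fst q \<otimes>\<^bsub>M1\<^esub> fst p = fst q" unfolding lhd_def by (simp add: pb_mult prod_eq_iff)
    next
      assume h: "fst q \<otimes>\<^bsub>M1\<^esub> fst p = fst q"
      have "f2 (snd q \<otimes>\<^bsub>M2\<^esub> snd p) = f1 (fst q \<otimes>\<^bsub>M1\<^esub> fst p)"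
        using s2.f_mult s1.f_mult c by simp
      also have "\<dots> = f2 (snd q)" using h c by simp
      finally have "snd q \<otimes>\<^bsub>M2\<^esub> snd p = snd q"
        using s2.f_inj[of "snd q" "snd q \<otimes>\<^bsub>M2\<^esub> snd p"] c K by simp
      then show "lhd PB p q" unfolding lhd_def using h by (simp add: pb_mult prod_eq_iff)
    qed
    show ?thesis using R L pK K by simp
  next
    case (A a)
    have "q \<in> NN" using A by (simp add: s2.one_N)
    moreover have "p \<in> carrier PB" "p \<notin> NN" using pK by auto
    moreover have "q \<in> carrier PB" using calculation NN_PB by simp
    ultimately have "\<not> lhd PB p q" unfolding lhd_def using P.mult_N by (metis)
    then show ?thesis using pK A by simp
  next
    case (B b)
    have "q \<in> NN" using B by (simp add: s1.one_N)
    moreover have "p \<in> carrier PB" "p \<notin> NN" using pK by auto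
    moreover have "q \<in> carrier PB" using calculation NN_PB by simp
    ultimately have "\<not> lhd PB p q" unfolding lhd_def using P.mult_N by (metis)
    then show ?thesis using pK B by simp
  qed
next
  case (A a)
  note pA = A
  have pN: "p \<in> NN" using A by (simp add: s2.one_N)
  have ac: "a \<in> carrier M1" using A s1.inN by simp
  show ?thesis using q
  proof (cases rule: prime_cases)
    case K
    then have "lhd PB p q" unfolding lhd_def using P.absorb pN by simp
    then show ?thesis using pA K by simp
  next
    case (A a')
    have a'c: "a' \<in> carrier M1" using A s1.inN by simp
    have "lhd PB p q = (a' \<otimes>\<^bsub>M1\<^esub> a = a')" unfolding lhd_def using pA A by (simp add: pb_mult)
    then show ?thesis using pA A by (simp add: lhd_def)
  next
    case (B b')
    have b'c: "b' \<in> carrier M2" using B s2.inN by simp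
    have "\<not> lhd PB p q" unfolding lhd_def using pA B ac b'c by (simp add: pb_mult)
    then show ?thesis using pA B by simp
  qed
next
  case (B b)
  note pB = B
  have pN: "p \<in> NN" using B by (simp add: s1.one_N)
  have bc: "b \<in> carrier M2" using B s2.inN by simp
  show ?thesis using q
  proof (cases rule: prime_cases)
    case K
    then have "lhd PB p q" unfolding lhd_def using P.absorb pN by simp
    then show ?thesis using pB K by simp
  next
    case (A a')
    have a'c: "a' \<in> carrier M1" using A s1.inN by simp
    have "\<not> lhd PB p q" unfolding lhd_def using pB A bc a'c by (simp add: pb_mult)
    then show ?thesis using pB A by simp
  next
    case (B b')
    have b'c: "b' \<in> carrier M2" using B s2.inN by simp
    have "lhd PB p q = (b' \<otimes>\<^bsub>M2\<^esub> b = b')" unfolding lhd_def using pB B by (simp add: pb_mult)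
    then show ?thesis using pB B by (simp add: lhd_def)
  qed
qed

lemma pb_main: "primitive PB \<and>
    (\<exists>N \<psi> \<chi> g.
       order_ideal PB N \<and>
       \<psi> \<in> iso (submon PB N) (submon M1 N1 \<times>\<times> submon M2 N2) \<and>
       \<chi> \<in> iso (quot PB N) S \<and>
       bij_betw g (primes PB)
         (Inl ` primes S \<union> Inr ` (Inl ` primes (submon M1 N1) \<union> Inr ` primes (submon M2 N2))) \<and>
       (\<forall>p\<in>primes PB - N. g p = Inl (\<chi> (qclass PB N p))) \<and>
       (\<forall>p\<in>primes PB \<inter> N. \<forall>a. g p = Inr (Inl a) \<longrightarrow> \<psi> p = (a, \<one>\<^bsub>M2\<^esub>)) \<and>
       (\<forall>p\<in>primes PB \<inter> N. \<forall>b. g p = Inr (Inr b) \<longrightarrow> \<psi> p = (\<one>\<^bsub>M1\<^esub>, b)) \<and>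
       (\<forall>p\<in>primes PB. \<forall>q\<in>primes PB. lhd PB p q \<longleftrightarrow> lhd_sum S (submon M1 N1) (submon M2 N2) (g p) (g q)))"
proof -
  define \<chi> where "\<chi> = (\<lambda>A. FF (SOME a. a \<in> A))"
  have chi: "\<chi> \<in> iso (quot PB NN) S" "\<And>x. x \<in> carrier PB \<Longrightarrow> \<chi> (qclass PB NN x) = FF x"
    using P.quot_iso[OF s1.S_mon FF_props(1) FF_props(2) FF_props(3)] unfolding \<chi>_def by auto
  have c1: "\<forall>p\<in>primes PB - NN. gmap p = Inl (\<chi> (qclass PB NN p))"
  proof
    fix p assume p: "p \<in> primes PB - NN"
    then have pc: "p \<in> carrier PB" using primes_carrier[of p PB] by simp
    then have "fst p \<notin> N1" using p PB_NN_iff by auto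
    then show "gmap p = Inl (\<chi> (qclass PB NN p))" using chi(2)[OF pc] by (simp add: gmap_def FF_def)
  qed
  have c2: "\<forall>p\<in>primes PB \<inter> NN. \<forall>a. gmap p = Inr (Inl a) \<longrightarrow> id p = (a, \<one>\<^bsub>M2\<^esub>)"
  proof (intro ballI allI impI)
    fix p a assume p: "p \<in> primes PB \<inter> NN" and g: "gmap p = Inr (Inl a)"
    have "p \<in> primes PB" using p by simp
    then show "id p = (a, \<one>\<^bsub>M2\<^esub>)" by (cases rule: prime_cases) (use g in auto)
  qed
  have c3: "\<forall>p\<in>primes PB \<inter> NN. \<forall>b. gmap p = Inr (Inr b) \<longrightarrow> id p = (\<one>\<^bsub>M1\<^esub>, b)"
  proof (intro ballI allI impI)
    fix p b assume p: "p \<in> primes PB \<inter> NN" and g: "gmap p = Inr (Inr b)"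
    have "p \<in> primes PB" using p by simp
    then show "id p = (\<one>\<^bsub>M1\<^esub>, b)" by (cases rule: prime_cases) (use g in auto)
  qed
  have c4: "\<forall>p\<in>primes PB. \<forall>q\<in>primes PB. lhd PB p q \<longleftrightarrow> lhd_sum S (submon M1 N1) (submon M2 N2) (gmap p) (gmap q)"
    using g_lhd by blast
  show ?thesis
    using PB_primitive P.oi psi_iso chi(1) g_bij c1 c2 c3 c4 by blast
qed

end



theorem mainTheorem12:
  fixes M1 :: "'a monoid" and M2 :: "'b monoid" and S :: "'s monoid"
    and N1 :: "'a set" and N2 :: "'b set"
    and \<phi>1 :: "'a set \<Rightarrow> 's" and \<phi>2 :: "'b set \<Rightarrow> 's"
  assumes "primitive M1" and "primitive M2"
    and "order_ideal M1 N1" and "order_ideal M2 N2"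
    and "comm_monoid S"
    and "\<phi>1 \<in> iso (quot M1 N1) S" and "\<phi>2 \<in> iso (quot M2 N2) S"
    and "\<forall>p\<in>primes (submon M1 N1). \<forall>q\<in>primes M1 - primes (submon M1 N1). lhd M1 p q"
    and "\<forall>p\<in>primes (submon M2 N2). \<forall>q\<in>primes M2 - primes (submon M2 N2). lhd M2 p q"
  defines "P \<equiv> pullback M1 M2 (\<lambda>x. \<phi>1 (qclass M1 N1 x)) (\<lambda>y. \<phi>2 (qclass M2 N2 y))"
  shows "primitive P \<and>
    (\<exists>N \<psi> \<chi> g.
       order_ideal P N \<and>
       \<psi> \<in> iso (submon P N) (submon M1 N1 \<times>\<times> submon M2 N2) \<and>
       \<chi> \<in> iso (quot P N) S \<and>
       bij_betw g (primes P)
         (Inl ` primes S \<union> Inr ` (Inl ` primes (submon M1 N1) \<union> Inr ` primes (submon M2 N2))) \<and>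
       (\<forall>p\<in>primes P - N. g p = Inl (\<chi> (qclass P N p))) \<and>
       (\<forall>p\<in>primes P \<inter> N. \<forall>a. g p = Inr (Inl a) \<longrightarrow> \<psi> p = (a, \<one>\<^bsub>M2\<^esub>)) \<and>
       (\<forall>p\<in>primes P \<inter> N. \<forall>b. g p = Inr (Inr b) \<longrightarrow> \<psi> p = (\<one>\<^bsub>M1\<^esub>, b)) \<and>
       (\<forall>p\<in>primes P. \<forall>q\<in>primes P. lhd P p q \<longleftrightarrow> lhd_sum S (submon M1 N1) (submon M2 N2) (g p) (g q)))"
proof -
  have cm1: "comm_monoid M1" using assms(1) unfolding primitive_def by simp
  have cm2: "comm_monoid M2" using assms(2) unfolding primitive_def by simp
  have oi1: "oideal M1 N1" using cm1 assms(3) by (simp add: oideal_def oideal_axioms_def)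
  have oi2: "oideal M2 N2" using cm2 assms(4) by (simp add: oideal_def oideal_axioms_def)
  have pg1: "primely_generated M1" using assms(1) unfolding primitive_def by simp
  have pg2: "primely_generated M2" using assms(2) unfolding primitive_def by simp
  have ab1: "absorbing M1 N1"
    using oi1 oideal.absorb_from_H[OF oi1 pg1 assms(8)] by (simp add: absorbing_def absorbing_axioms_def)
  have ab2: "absorbing M2 N2"
    using oi2 oideal.absorb_from_H[OF oi2 pg2 assms(9)] by (simp add: absorbing_def absorbing_axioms_def)
  have Sm: "monoid S" using assms(5) comm_monoid.axioms(1) by blast
  have fs1: "fside M1 N1 S (\<lambda>x. \<phi>1 (qclass M1 N1 x))"
    using ab1 assms(5) oideal.iso_f[OF oi1 Sm assms(6)] by (simp add: fside_def fside_axioms_def)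
  have fs2: "fside M2 N2 S (\<lambda>x. \<phi>2 (qclass M2 N2 x))"
    using ab2 assms(5) oideal.iso_f[OF oi2 Sm assms(7)] by (simp add: fside_def fside_axioms_def)
  have "pb M1 N1 M2 N2 S (\<lambda>x. \<phi>1 (qclass M1 N1 x)) (\<lambda>y. \<phi>2 (qclass M2 N2 y))"
    using fs1 fs2 assms(1,2) by (simp add: pb_def pb_axioms_def)
  then show ?thesis unfolding assms(10) by (rule pb.pb_main)
qed


end
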